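(* Let $\mathbb{K}$ be an algebraically closed field of characteristic zero, $\mathcal{C}\subset\mathbb{K}^2$ an affine irreducible plane curve, $A=(a,b)\in\mathbb{K}^2$, and assume that $\mathcal{C}_0\neq\emptyset$, that $\mathcal{C}$ is not a circle centered at $A$, and that $\mathcal{C}$ is not a line passing through $A$. Then for all but finitely many $d\in\mathbb{K}\setminus\{0\}$, all irreducible components of $\mathfrak{C}(\mathcal{C},A,d)$ are simple.
   Context: For $\mathcal{C}$ defined by an irreducible polynomial $f(y_1,y_2)$ and $d\in\mathbb{K}\setminus\{0\}$: $\mathfrak{B}(\mathcal{C},A,d)\subset\mathbb{K}^2\times\mathbb{K}^2\times\mathbb{K}$ is the set of $(\bar x,\bar y,w)$ with $f(y_1,y_2)=0$, $(x_1-y_1)^2+(x_2-y_2)^2=d^2$, $(y_2-b)(x_1-y_1)-(y_1-a)(x_2-y_2)=0$, $w((y_1-a)^2+(y_2-b)^2)=1$; $\pi_1,\pi_2$ are the projections $(\bar x,\bar y,w)\mapsto\bar x$, $\mapsto\bar y$; the conchoid $\mathfrak{C}(\mathcal{C},A,d)$ is the Zariski closure of $\pi_1(\mathfrak{B}(\mathcal{C},A,d))$. $\mathcal{C}_0=\{(p_1,p_2)\in\mathcal{C}:(p_1-a)^2+(p_2-b)^2\neq0\}$. An irreducible component $\mathcal{M}$ of $\mathfrak{C}(\mathcal{C},A,d)$ is simple if there is a non-empty Zariski dense $\Omega\subset\mathcal{M}$ with $\mathrm{Card}(\pi_2(\pi_1^{-1}(Q)))=1$ for all $Q\in\Omega$;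 otherwise special. A circle centered at $A$ of radius $r$ is $(y_1-a)^2+(y_2-b)^2=r^2$. *)

theory Defs
  imports "HOL-Computational_Algebra.Computational_Algebra"
begin

text \<open>Bivariate polynomials over K are represented as elements of K[y1][y2],
  i.e. of type 'a poly poly: the outer variable is y2, the coefficients are
  polynomials in y1.\<close>

definition eval2 :: "'a::comm_semiring_1 poly poly \<Rightarrow> 'a \<Rightarrow> 'a \<Rightarrow> 'a" where
  "eval2 f y1 y2 = poly (map_poly (\<lambda>c. poly c y1) f) y2"

definition curve :: "'a::comm_semiring_1 poly poly \<Rightarrow> ('a \<times> 'a) set" where
  "curve f = {(y1, y2). eval2 f y1 y2 = 0}"

definition zariski_closed :: "('a::comm_semiring_1 \<times> 'a) set \<Rightarrow> bool" where
  "zariski_closed S \<longleftrightarrow> (\<exists>P :: 'a poly poly set. S = {(x1, x2). \<forall>g\<in>P. eval2 g x1 x2 = 0})"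

definition zariski_closure :: "('a::comm_semiring_1 \<times> 'a) set \<Rightarrow> ('a \<times> 'a) set" where
  "zariski_closure S = \<Inter> {T. zariski_closed T \<and> S \<subseteq> T}"

definition zariski_irreducible :: "('a::comm_semiring_1 \<times> 'a) set \<Rightarrow> bool" where
  "zariski_irreducible M \<longleftrightarrow> M \<noteq> {} \<and> zariski_closed M \<and>
     (\<forall>M1 M2. zariski_closed M1 \<and> zariski_closed M2 \<and> M = M1 \<union> M2 \<longrightarrow> M = M1 \<or> M = M2)"

definition irreducible_component :: "('a::comm_semiring_1 \<times> 'a) set \<Rightarrow> ('a \<times> 'a) set \<Rightarrow> bool" where
  "irreducible_component M X \<longleftrightarrow> M \<subseteq> X \<and> zariski_irreducible M \<and>
     (\<forall>N. zariski_irreducible N \<and> M \<subseteq> N \<and> N \<subseteq> X \<longrightarrow> N = M)"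

definition conchoid_B :: "'a::field poly poly \<Rightarrow> 'a \<times> 'a \<Rightarrow> 'a \<Rightarrow> (('a \<times> 'a) \<times> ('a \<times> 'a) \<times> 'a) set" where
  "conchoid_B f A d = {((x1, x2), (y1, y2), w).
      eval2 f y1 y2 = 0 \<and>
      (x1 - y1)^2 + (x2 - y2)^2 = d^2 \<and>
      (y2 - snd A) * (x1 - y1) - (y1 - fst A) * (x2 - y2) = 0 \<and>
      w * ((y1 - fst A)^2 + (y2 - snd A)^2) = 1}"

definition pi1 :: "('a \<times> 'a) \<times> ('a \<times> 'a) \<times> 'a \<Rightarrow> 'a \<times> 'a" where
  "pi1 p = fst p"

definition pi2 :: "('a \<times> 'a) \<times> ('a \<times> 'a) \<times> 'a \<Rightarrow> 'a \<times> 'a" where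
  "pi2 p = fst (snd p)"

definition conchoid :: "'a::field poly poly \<Rightarrow> 'a \<times> 'a \<Rightarrow> 'a \<Rightarrow> ('a \<times> 'a) set" where
  "conchoid f A d = zariski_closure (pi1 ` conchoid_B f A d)"

text \<open>C_0: points of C not on the isotropic lines through A.\<close>
definition C0 :: "'a::field poly poly \<Rightarrow> 'a \<times> 'a \<Rightarrow> ('a \<times> 'a) set" where
  "C0 f A = {(p1, p2) \<in> curve f. (p1 - fst A)^2 + (p2 - snd A)^2 \<noteq> 0}"

definition simple_component :: "'a::field poly poly \<Rightarrow> 'a \<times> 'a \<Rightarrow> 'a \<Rightarrow> ('a \<times> 'a) set \<Rightarrow> bool" where
  "simple_component f A d M \<longleftrightarrow>
     (\<exists>\<Omega>. \<Omega> \<noteq> {} \<and> \<Omega> \<subseteq> M \<and> zariski_closure \<Omega> = M \<and>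
        (\<forall>Q\<in>\<Omega>. card (pi2 ` (pi1 -` {Q} \<inter> conchoid_B f A d)) = 1))"

definition circle_centered :: "'a::field \<times> 'a \<Rightarrow> 'a \<Rightarrow> ('a \<times> 'a) set" where
  "circle_centered A r = {(y1, y2). (y1 - fst A)^2 + (y2 - snd A)^2 = r^2}"

definition line_through :: "'a::field \<times> 'a \<Rightarrow> ('a \<times> 'a) set \<Rightarrow> bool" where
  "line_through A L \<longleftrightarrow> (\<exists>u v. (u, v) \<noteq> (0, 0) \<and>
      L = {(y1, y2). u * (y1 - fst A) + v * (y2 - snd A) = 0})"

end

theory Submission
  imports Defs
begin

lemma eval2_alt: "eval2 f x y = poly (poly f [:y:]) x"
  unfolding eval2_def
  by (induction f) (auto simp: map_poly_pCons)

lemma eval2_add [simp]: "eval2 (f + g) x y = eval2 f x y + eval2 g x y"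
  by (simp add: eval2_alt)
lemma eval2_diff [simp]: "eval2 (f - g) x y = eval2 f x y - (eval2 g x y :: 'a :: comm_ring_1)"
  by (simp add: eval2_alt)
lemma eval2_minus [simp]: "eval2 (- f) x y = - (eval2 f x y :: 'a :: comm_ring_1)"
  by (simp add: eval2_alt)
lemma eval2_mult [simp]: "eval2 (f * g) x y = eval2 f x y * eval2 g x y"
  by (simp add: eval2_alt)
lemma eval2_power [simp]: "eval2 (f ^ n) x y = eval2 f x y ^ n"
  by (simp add: eval2_alt poly_power)
lemma eval2_const [simp]: "eval2 [:[:c:]:] x y = c"
  by (simp add: eval2_alt)
lemma eval2_0 [simp]: "eval2 0 x y = 0"
  by (simp add: eval2_alt)
lemma eval2_1 [simp]: "eval2 1 x y = 1"
  by (simp add: eval2_alt)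
lemma eval2_X [simp]: "eval2 [:[:0,1:]:] x y = x"
  by (simp add: eval2_alt)
lemma eval2_Y [simp]: "eval2 [:0,1:] x y = y"
  by (simp add: eval2_alt)
lemma eval2_sum [simp]: "eval2 (sum g S) x y = (\<Sum>i\<in>S. eval2 (g i) x y)"
  by (induction S rule: infinite_finite_induct) auto
lemma eval2_of_nat [simp]: "eval2 (of_nat n) x y = of_nat n"
  by (induction n) auto

definition restr :: "'a::comm_semiring_1 \<Rightarrow> 'a poly poly \<Rightarrow> 'a poly" where
  "restr a P = map_poly (\<lambda>c. poly c a) P"

lemma eval2_restr: "eval2 P a b = poly (restr a P) b"
  by (simp add: eval2_def restr_def)

lemma restr_eq_0_iff: "restr a P = 0 \<longleftrightarrow> (\<forall>j. poly (coeff P j) a = 0)"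
  unfolding restr_def
  by (metis coeff_0 coeff_map_poly leading_coeff_0_iff poly_0 poly_eqI)

definition lin :: "'a::comm_ring_1 \<Rightarrow> 'a poly poly" where
  "lin a = [:[:-a,1:]:]"

lemma lin_dvd_iff:
  fixes a :: "'a::field"
  shows "lin a dvd P \<longleftrightarrow> restr a P = 0"
proof
  assume "lin a dvd P"
  then obtain Q where Q: "P = lin a * Q" by (auto elim: dvdE)
  show "restr a P = 0" unfolding restr_eq_0_iff
    by (simp add: Q lin_def)
next
  assume "restr a P = 0"
  hence h: "\<And>j. [:-a,1:] dvd coeff P j" by (simp add: restr_eq_0_iff poly_eq_0_iff_dvd)
  define Q where "Q = map_poly (\<lambda>q. q div [:-a,1:]) P"
  have "P = lin a * Q"
  proof (rule poly_eqI)
    fix j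
    have e: "lin a * Q = smult [:-a,1:] Q" by (simp add: lin_def)
    have "coeff P j = [:-a,1:] * (coeff P j div [:-a,1:])"
      using h[of j] by (metis dvd_mult_div_cancel)
    thus "coeff P j = coeff (lin a * Q) j"
      unfolding e coeff_smult by (simp add: Q_def coeff_map_poly)
  qed
  thus "lin a dvd P" by simp
qed

lemma restr_mult: "restr a (P * Q) = restr a P * restr a (Q :: 'a::field_char_0 poly poly)"
proof -
  have "\<forall>b. poly (restr a (P * Q)) b = poly (restr a P * restr a Q) b"
    by (simp flip: eval2_restr)
  hence "\<forall>b. poly (restr a (P * Q) - restr a P * restr a Q) b = 0" by simp
  thus ?thesis using poly_all_0_iff_0 by (metis eq_iff_diff_eq_0)
qed

lemma lin_prime:
  fixes a :: "'a::field_char_0"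
  assumes "lin a dvd P * Q" shows "lin a dvd P \<or> lin a dvd Q"
  using assms by (simp add: lin_dvd_iff restr_mult)

lemma eval2_zero_all:
  fixes f :: "'a::field_char_0 poly poly"
  assumes "\<And>x y. eval2 f x y = 0" shows "f = 0"
proof -
  have "\<And>x. restr x f = 0" using assms poly_all_0_iff_0 by (metis eval2_restr)
  hence "\<And>x j. poly (coeff f j) x = 0" by (simp add: restr_eq_0_iff)
  hence "\<And>j. coeff f j = 0" using poly_all_0_iff_0 by blast
  thus ?thesis using poly_eqI by (metis coeff_0)
qed


lemma is_unit_pp: "(P :: 'a::field poly poly) dvd 1 \<longleftrightarrow> (\<exists>c. c \<noteq> 0 \<and> P = [:[:c:]:])"
  by (auto simp: is_unit_poly_iff dvd_field_iff)

lemma lin_nz: "lin a \<noteq> 0" by (simp add: lin_def)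
lemma lin_not_unit: "\<not> lin (a::'a::field) dvd 1" by (auto simp: is_unit_pp lin_def)

lemma irr_deg_pos_restr:
  fixes F :: "'a::field_char_0 poly poly"
  assumes "irreducible F" "degree F > 0"
  shows "restr a F \<noteq> 0"
proof
  assume "restr a F = 0"
  hence "lin a dvd F" by (simp add: lin_dvd_iff)
  then obtain Q where Q: "F = lin a * Q" by (auto elim: dvdE)
  have "Q \<noteq> 0" using Q assms by auto
  hence "degree Q = degree F" using Q by (simp add: degree_mult_eq lin_nz lin_def)
  hence "\<not> Q dvd 1" using assms by (auto simp: is_unit_pp)
  thus False using irreducibleD[OF assms(1) Q] lin_not_unit by blast
qed

lemma irr_not_lin_dvd:
  fixes F :: "'a::field_char_0 poly poly"
  assumes "irreducible F" "degree F > 0"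
  shows "\<not> lin a dvd F"
  using irr_deg_pos_restr[OF assms] by (simp add: lin_dvd_iff)

lemma irr_deg0:
  fixes F :: "'a::{alg_closed_field,field_char_0} poly poly"
  assumes "irreducible F" "degree F = 0"
  shows "\<exists>\<alpha>. \<forall>x y. eval2 F x y = 0 \<longleftrightarrow> x = \<alpha>"
proof -
  define c where "c = coeff F 0"
  have F: "F = [:c:]" using assms(2) by (simp add: c_def degree_0_id)
  have "c \<noteq> 0" using assms F by auto
  have "degree c > 0"
  proof (rule ccontr)
    assume "\<not> degree c > 0"
    hence "c = [:coeff c 0:]" by (simp add: degree_0_id)
    hence "F dvd 1" using F \<open>c \<noteq> 0\<close> by (metis is_unit_pp pCons_0_0)
    thus False using assms(1) irreducible_not_unit by blast
  qed
  then obtain \<alpha> where "poly c \<alpha> = 0" using alg_closed_imp_poly_has_root by blast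
  then obtain c' where c': "c = [:-\<alpha>,1:] * c'" by (auto simp: poly_eq_0_iff_dvd elim: dvdE)
  have "F = lin \<alpha> * [:c':]" by (simp add: F c' lin_def)
  hence "[:c':] dvd 1" using irreducibleD[OF assms(1)] lin_not_unit by blast
  then obtain u where u: "u \<noteq> 0" "c' = [:u:]" by (auto simp: is_unit_pp)
  show ?thesis
    by (rule exI[of _ \<alpha>]) (auto simp: eval2_alt F c' u)
qed

lemma infinite_nonroots:
  fixes l :: "'a::field_char_0 poly"
  assumes "l \<noteq> 0" shows "infinite {a. poly l a \<noteq> 0}"
proof
  assume "finite {a. poly l a \<noteq> 0}"
  hence "finite ({a. poly l a \<noteq> 0} \<union> {a. poly l a = 0})" using poly_roots_finite[OF assms] by auto
  moreover have "{a. poly l a \<noteq> 0} \<union> {a. poly l a = 0} = UNIV" by auto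
  ultimately show False using infinite_UNIV_char_0 by metis
qed

lemma curve_infinite:
  fixes F :: "'a::{alg_closed_field,field_char_0} poly poly"
  assumes "irreducible F"
  shows "infinite (curve F)"
proof (cases "degree F = 0")
  case True
  then obtain \<alpha> where h: "\<And>x y. eval2 F x y = 0 \<longleftrightarrow> x = \<alpha>" using irr_deg0[OF assms] by blast
  have "(\<lambda>y. (\<alpha>, y)) ` UNIV \<subseteq> curve F" by (auto simp: curve_def h)
  moreover have "infinite ((\<lambda>y. (\<alpha>, y)) ` (UNIV :: 'a set))"
    using infinite_UNIV_char_0 finite_imageD[of "\<lambda>y. (\<alpha>, y)" UNIV] by (auto simp: inj_on_def)
  ultimately show ?thesis using infinite_super by blast
next
  case False
  define l where "l = lead_coeff F"
  have "F \<noteq> 0" using assms by auto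
  hence "l \<noteq> 0" by (simp add: l_def)
  have ex: "\<exists>b. eval2 F a b = 0" if "poly l a \<noteq> 0" for a
  proof -
    have "coeff (restr a F) (degree F) = poly l a" by (simp add: restr_def coeff_map_poly l_def)
    hence "degree (restr a F) \<ge> degree F" using that le_degree by metis
    hence "degree (restr a F) > 0" using False by auto
    then obtain b where "poly (restr a F) b = 0" using alg_closed_imp_poly_has_root by blast
    thus ?thesis by (auto simp: eval2_restr)
  qed
  define g where "g a = (a, SOME b. eval2 F a b = 0)" for a
  have "g ` {a. poly l a \<noteq> 0} \<subseteq> curve F"
    using ex by (auto simp: g_def curve_def intro: someI_ex)
  moreover have "infinite (g ` {a. poly l a \<noteq> 0})"
    using infinite_nonroots[OF \<open>l \<noteq> 0\<close>] finite_imageD[of g] by (auto simp: inj_on_def g_def)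
  ultimately show ?thesis using infinite_super by blast
qed

lemma deg_lin_mult: "(c::'a::field poly) \<noteq> 0 \<Longrightarrow> degree ([:-a,1:] * c) = Suc (degree c)"
  by (subst degree_mult_eq) auto

lemma gauss_cancel:
  fixes F :: "'a::{alg_closed_field,field_char_0} poly poly"
  assumes "irreducible F" "degree F > 0"
  shows "c \<noteq> 0 \<Longrightarrow> [:c:] * G = H * F \<Longrightarrow> F dvd G"
proof (induction "degree c" arbitrary: c H rule: less_induct)
  case (less c H)
  show ?case
  proof (cases "degree c = 0")
    case True
    then obtain c0 where c0: "c = [:c0:]" "c0 \<noteq> 0" using less.prems True by (metis degree0_coeffs pCons_0_0)
    have "G = [:[:inverse c0:]:] * ([:c:] * G)" using c0 by (simp add: c0 one_pCons[symmetric])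
    also have "\<dots> = ([:[:inverse c0:]:] * H) * F" using less.prems by (simp add: mult.assoc)
    finally show ?thesis by (metis dvd_triv_right)
  next
    case False
    then obtain \<alpha> where "poly c \<alpha> = 0" using alg_closed_imp_poly_has_root by blast
    then obtain c' where c': "c = [:-\<alpha>,1:] * c'" by (auto simp: poly_eq_0_iff_dvd elim: dvdE)
    have cc: "[:c:] = lin \<alpha> * [:c':]" by (simp add: c' lin_def)
    have "lin \<alpha> dvd H * F" using less.prems(2) cc by (metis dvd_triv_left mult.assoc)
    hence "lin \<alpha> dvd H" using lin_prime irr_not_lin_dvd[OF assms] by blast
    then obtain H' where H': "H = lin \<alpha> * H'" by (auto elim: dvdE)
    have "lin \<alpha> * ([:c':] * G) = lin \<alpha> * (H' * F)"
      using less.prems(2) cc H' by (simp add: mult.assoc)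
    hence e: "[:c':] * G = H' * F" by (metis lin_nz mult_left_cancel)
    have "c' \<noteq> 0" using less.prems c' by auto
    have "degree c = Suc (degree c')" using c' \<open>c' \<noteq> 0\<close> by (metis deg_lin_mult)
    thus ?thesis using less.hyps[of c' H'] e \<open>c' \<noteq> 0\<close> by simp
  qed
qed

lemma gauss_cancel1:
  fixes F :: "'a::{alg_closed_field,field_char_0} poly poly"
  assumes "irreducible F" "degree F > 0"
  shows "c \<noteq> 0 \<Longrightarrow> degree R > 0 \<Longrightarrow> [:c:] * F = Q * R \<Longrightarrow> c' \<noteq> 0 \<Longrightarrow> [:c':] * G = Q' * R \<Longrightarrow> F dvd G"
proof (induction "degree c" arbitrary: c Q R Q' rule: less_induct)
  case (less c Q R Q')
  show ?case
  proof (cases "degree c = 0")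
    case True
    then obtain c0 where c0: "c = [:c0:]" "c0 \<noteq> 0" using less.prems True by (metis degree0_coeffs pCons_0_0)
    have "F = [:[:inverse c0:]:] * ([:c:] * F)" using c0 by (simp add: c0 one_pCons[symmetric])
    also have "\<dots> = ([:[:inverse c0:]:] * Q) * R" using less.prems by (simp add: mult.assoc)
    finally have FQR: "F = ([:[:inverse c0:]:] * Q) * R" .
    have "\<not> R dvd 1" using less.prems(2) by (auto simp: is_unit_pp)
    hence "[:[:inverse c0:]:] * Q dvd 1" using irreducibleD[OF assms(1) FQR] by blast
    then obtain u where u: "u \<noteq> 0" "[:[:inverse c0:]:] * Q = [:[:u:]:]" by (auto simp: is_unit_pp)
    have "F = [:[:u:]:] * R" using FQR u(2) by (simp only:)
    hence "R = [:[:inverse u:]:] * F" using u by (simp add: one_pCons[symmetric])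
    hence "[:c':] * G = (Q' * [:[:inverse u:]:]) * F" using less.prems(5) by (simp add: mult.assoc)
    thus ?thesis using gauss_cancel[OF assms less.prems(4)] by blast
  next
    case False
    then obtain \<alpha> where "poly c \<alpha> = 0" using alg_closed_imp_poly_has_root by blast
    then obtain c1 where c1: "c = [:-\<alpha>,1:] * c1" by (auto simp: poly_eq_0_iff_dvd elim: dvdE)
    have cc: "[:c:] = lin \<alpha> * [:c1:]" by (simp add: c1 lin_def)
    have "c1 \<noteq> 0" using less.prems c1 by auto
    have "degree c = Suc (degree c1)" using c1 \<open>c1 \<noteq> 0\<close> by (metis deg_lin_mult)
    hence deg: "degree c1 < degree c" by simp
    have "lin \<alpha> dvd Q * R" using less.prems(3) cc by (metis dvd_triv_left mult.assoc)
    hence "lin \<alpha> dvd Q \<or> lin \<alpha> dvd R" using lin_prime by blast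
    thus ?thesis
    proof
      assume "lin \<alpha> dvd Q"
      then obtain Q1 where Q1: "Q = lin \<alpha> * Q1" by (auto elim: dvdE)
      have "lin \<alpha> * ([:c1:] * F) = lin \<alpha> * (Q1 * R)"
        using less.prems(3) cc Q1 by (simp add: mult.assoc)
      hence "[:c1:] * F = Q1 * R" by (metis lin_nz mult_left_cancel)
      thus ?thesis using less.hyps[OF deg] less.prems \<open>c1 \<noteq> 0\<close> by blast
    next
      assume "lin \<alpha> dvd R"
      then obtain R1 where R1: "R = lin \<alpha> * R1" by (auto elim: dvdE)
      have "R1 \<noteq> 0" using R1 less.prems(2) by auto
      have dR1: "degree R1 > 0" using R1 less.prems(2) \<open>R1 \<noteq> 0\<close> by (simp add: degree_mult_eq lin_nz lin_def)
      have "lin \<alpha> * ([:c1:] * F) = lin \<alpha> * (Q * R1)"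
        using less.prems(3) cc R1 by (simp add: ac_simps)
      hence e1: "[:c1:] * F = Q * R1" by (metis lin_nz mult_left_cancel)
      have e2: "[:c':] * G = (Q' * lin \<alpha>) * R1" using less.prems(5) R1 by (simp add: ac_simps)
      show ?thesis using less.hyps[OF deg \<open>c1 \<noteq> 0\<close> dR1 e1 less.prems(4) e2] .
    qed
  qed
qed


lemma zl_deg_pos:
  fixes F G :: "'a::{alg_closed_field,field_char_0} poly poly"
  assumes irr: "irreducible F" and dF: "degree F > 0"
    and inf: "infinite {(x,y). eval2 F x y = 0 \<and> eval2 G x y = 0}"
  shows "F dvd G"
proof -
  define I where "I R \<longleftrightarrow> (\<exists>U V. R = U*F + V*G)" for R
  have "F \<noteq> 0" using irr by auto
  have IF: "I F" unfolding I_def by (rule exI[of _ 1], rule exI[of _ 0]) simp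
  have IG: "I G" unfolding I_def by (rule exI[of _ 0], rule exI[of _ 1]) simp
  define n where "n = (LEAST n. \<exists>R. I R \<and> R \<noteq> 0 \<and> degree R = n)"
  have "\<exists>R. I R \<and> R \<noteq> 0 \<and> degree R = n"
    unfolding n_def by (rule LeastI_ex) (use IF \<open>F \<noteq> 0\<close> in blast)
  then obtain R where R: "I R" "R \<noteq> 0" "degree R = n" by blast
  have min: "degree R \<le> degree R'" if "I R'" "R' \<noteq> 0" for R'
    unfolding R(3) n_def by (rule Least_le) (use that in blast)
  have key: "\<exists>c Q. c \<noteq> 0 \<and> [:c:] * P = Q * R" if IP: "I P" for P
  proof -
    obtain q r where qr: "pseudo_divmod P R = (q, r)" by (cases "pseudo_divmod P R") auto
    define e where "e = coeff R (degree R) ^ (Suc (degree P) - degree R)"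
    have e0: "e \<noteq> 0" using R(2) by (simp add: e_def)
    have eq: "smult e P = R * q + r" and deg: "r = 0 \<or> degree r < degree R"
      using pseudo_divmod[OF R(2) qr] by (simp_all add: e_def)
    obtain U1 V1 where P: "P = U1*F + V1*G" using IP I_def by blast
    obtain U2 V2 where R2: "R = U2*F + V2*G" using R(1) I_def by blast
    have "r = smult e P - R * q" using eq by simp
    also have "\<dots> = (smult e U1 - q*U2)*F + (smult e V1 - q*V2)*G"
      unfolding P R2 by (simp add: algebra_simps smult_add_right)
    finally have "I r" unfolding I_def by blast
    have "r = 0"
    proof (rule ccontr)
      assume "r \<noteq> 0"
      with min[OF \<open>I r\<close>] deg show False by simp
    qed
    hence "[:e:] * P = q * R" using eq by (simp add: mult.commute)
    thus ?thesis using e0 by blast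
  qed
  obtain c Q where cQ: "c \<noteq> 0" "[:c:] * F = Q * R" using key[OF IF] by blast
  obtain c' Q' where cQ': "c' \<noteq> 0" "[:c':] * G = Q' * R" using key[OF IG] by blast
  show ?thesis
  proof (cases "degree R > 0")
    case True
    show ?thesis by (rule gauss_cancel1[OF irr dF cQ(1) True cQ(2) cQ'(1) cQ'(2)])
  next
    case False
    then obtain r0 where r0: "R = [:r0:]" by (metis degree0_coeffs neq0_conv)
    have "r0 \<noteq> 0" using r0 R(2) by auto
    obtain U2 V2 where R2: "R = U2*F + V2*G" using R(1) I_def by blast
    have sub: "{(x,y). eval2 F x y = 0 \<and> eval2 G x y = 0} \<subseteq>
        Sigma {x. poly r0 x = 0} (\<lambda>x. {y. poly (restr x F) y = 0})"
    proof clarify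
      fix x y assume h: "eval2 F x y = 0" "eval2 G x y = 0"
      have "eval2 R x y = 0" unfolding R2 using h by simp
      hence "poly r0 x = 0" by (simp add: r0 eval2_alt)
      moreover have "poly (restr x F) y = 0" using h by (simp add: eval2_restr)
      ultimately show "x \<in> {x. poly r0 x = 0} \<and> y \<in> {y. poly (restr x F) y = 0}" by simp
    qed
    have "finite (Sigma {x. poly r0 x = 0} (\<lambda>x. {y. poly (restr x F) y = 0}))"
      by (rule finite_SigmaI) (use poly_roots_finite \<open>r0 \<noteq> 0\<close> irr_deg_pos_restr[OF irr dF] in auto)
    with sub inf show ?thesis using finite_subset by blast
  qed
qed

lemma ZL:
  fixes F G :: "'a::{alg_closed_field,field_char_0} poly poly"
  assumes irr: "irreducible F"
    and inf: "infinite {(x,y). eval2 F x y = 0 \<and> eval2 G x y = 0}"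
    and p: "eval2 F x y = 0"
  shows "eval2 G x y = 0"
proof (cases "degree F = 0")
  case True
  then obtain \<alpha> where h: "\<And>x y. eval2 F x y = 0 \<longleftrightarrow> x = \<alpha>" using irr_deg0[OF irr] by blast
  have "restr \<alpha> G = 0"
  proof (rule ccontr)
    assume "restr \<alpha> G \<noteq> 0"
    hence "finite ((\<lambda>y. (\<alpha>, y)) ` {y. poly (restr \<alpha> G) y = 0})" using poly_roots_finite by blast
    moreover have "{(x,y). eval2 F x y = 0 \<and> eval2 G x y = 0} \<subseteq> (\<lambda>y. (\<alpha>, y)) ` {y. poly (restr \<alpha> G) y = 0}"
    proof clarify
      fix a b assume "eval2 F a b = 0" "eval2 G a b = 0"
      hence "a = \<alpha>" "poly (restr \<alpha> G) b = 0" using h by (auto simp: eval2_restr)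
      thus "(a, b) \<in> (\<lambda>y. (\<alpha>, y)) ` {y. poly (restr \<alpha> G) y = 0}" by auto
    qed
    ultimately show False using inf finite_subset by blast
  qed
  thus ?thesis using p h by (simp add: eval2_restr)
next
  case False
  hence "F dvd G" using zl_deg_pos[OF irr _ inf] by simp
  then obtain H where "G = F * H" by (auto elim: dvdE)
  thus ?thesis using p by simp
qed

lemma ZL_finite:
  fixes F G :: "'a::{alg_closed_field,field_char_0} poly poly"
  assumes irr: "irreducible F" and "eval2 F x y = 0" "eval2 G x y \<noteq> 0"
  shows "finite {(x,y). eval2 F x y = 0 \<and> eval2 G x y = 0}"
  using ZL[OF irr] assms by blast


definition VV :: "'a::comm_semiring_1 poly poly set \<Rightarrow> ('a \<times> 'a) set" where
  "VV P = {(x1, x2). \<forall>g\<in>P. eval2 g x1 x2 = 0}"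

lemma closed_iff: "zariski_closed S \<longleftrightarrow> (\<exists>P. S = VV P)"
  by (simp add: zariski_closed_def VV_def)

lemma VV_mem: "(x,y) \<in> VV P \<longleftrightarrow> (\<forall>g\<in>P. eval2 g x y = 0)"
  by (simp add: VV_def)

lemma closed_VV: "zariski_closed (VV P)" by (auto simp: closed_iff)

lemma closed_Inter:
  assumes "\<forall>S\<in>\<S>. zariski_closed S" shows "zariski_closed (\<Inter>\<S>)"
proof -
  from assms obtain fP where fP: "\<forall>S\<in>\<S>. S = VV (fP S)" unfolding closed_iff by metis
  have "\<Inter>\<S> = (\<Inter>S\<in>\<S>. VV (fP S))" using fP by blast
  also have "\<dots> = VV (\<Union>S\<in>\<S>. fP S)" by (auto simp: VV_def)
  finally have "\<Inter>\<S> = VV (\<Union>S\<in>\<S>. fP S)" .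
  thus ?thesis by (simp add: closed_VV)
qed

lemma closed_Int: "zariski_closed A \<Longrightarrow> zariski_closed B \<Longrightarrow> zariski_closed (A \<inter> B)"
  using closed_Inter[of "{A,B}"] by auto

lemma closed_Un:
  fixes A :: "('a::{comm_semiring_1,semiring_no_zero_divisors} \<times> 'a) set"
  assumes "zariski_closed A" "zariski_closed B" shows "zariski_closed (A \<union> B)"
proof -
  obtain P Q where A: "A = VV P" and B: "B = VV Q" using assms by (auto simp: closed_iff)
  have "A \<union> B = VV {p * q | p q. p \<in> P \<and> q \<in> Q}"
  proof (intro set_eqI iffI)
    fix z assume "z \<in> A \<union> B" thus "z \<in> VV {p * q | p q. p \<in> P \<and> q \<in> Q}"
      by (cases z) (auto simp: A B VV_def)
  next
    fix z assume z: "z \<in> VV {p * q | p q. p \<in> P \<and> q \<in> Q}"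
    obtain x y where xy: "z = (x, y)" by (cases z)
    show "z \<in> A \<union> B"
    proof (cases "z \<in> A")
      case False
      then obtain p where p: "p \<in> P" "eval2 p x y \<noteq> 0" by (auto simp: A VV_def xy)
      have "\<forall>q\<in>Q. eval2 q x y = 0"
      proof
        fix q assume "q \<in> Q"
        hence "p * q \<in> {p * q | p q. p \<in> P \<and> q \<in> Q}" using p(1) by blast
        moreover have "\<forall>g\<in>{p * q | p q. p \<in> P \<and> q \<in> Q}. eval2 g x y = 0"
          using z by (simp only: xy VV_mem)
        ultimately have "eval2 (p * q) x y = 0" by (rule bspec[rotated])
        thus "eval2 q x y = 0" using p by simp
      qed
      thus ?thesis by (simp add: B VV_def xy)
    qed simp
  qed
  thus ?thesis by (simp add: closed_VV)
qed

lemma closed_empty: "zariski_closed ({} :: ('a::comm_semiring_1 \<times> 'a) set)"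
proof -
  have "({} :: ('a \<times> 'a) set) = VV {1}" by (auto simp: VV_def)
  thus ?thesis by (metis closed_VV)
qed

lemma closed_UNIV: "zariski_closed (UNIV :: ('a::comm_semiring_1 \<times> 'a) set)"
proof -
  have "(UNIV :: ('a \<times> 'a) set) = VV {}" by (auto simp: VV_def)
  thus ?thesis by (metis closed_VV)
qed

lemma closed_singleton: "zariski_closed {(a::'a::comm_ring_1, b)}"
proof -
  have e1: "eval2 [:[:-a,1:]:] x y = x - a" for x y by (simp add: eval2_alt)
  have e2: "eval2 [:[:-b:],1:] x y = y - b" for x y by (simp add: eval2_alt)
  have "{(a, b)} = VV {[:[:-a,1:]:], [:[:-b:],1:]}" by (auto simp: VV_def e1 e2)
  thus ?thesis by (simp add: closed_VV)
qed

lemma closed_finite: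
  fixes S :: "('a::{comm_ring_1,semiring_no_zero_divisors} \<times> 'a) set"
  shows "finite S \<Longrightarrow> zariski_closed S"
proof (induction rule: finite_induct)
  case empty thus ?case by (rule closed_empty)
next
  case (insert z S)
  have "insert z S = {z} \<union> S" by auto
  thus ?case using closed_Un[OF closed_singleton[of "fst z" "snd z"] insert.IH] by simp
qed

lemma closed_curve: "zariski_closed (curve g)"
proof -
  have "curve g = VV {g}" by (auto simp: VV_def curve_def)
  thus ?thesis by (simp add: closed_VV)
qed

lemma closure_closed: "zariski_closed (zariski_closure S)"
  unfolding zariski_closure_def by (rule closed_Inter) auto

lemma closure_sup: "S \<subseteq> zariski_closure S"
  unfolding zariski_closure_def by auto

lemma closure_min: "zariski_closed T \<Longrightarrow> S \<subseteq> T \<Longrightarrow> zariski_closure S \<subseteq> T"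
  unfolding zariski_closure_def by auto

lemma closure_eq: "zariski_closed S \<Longrightarrow> zariski_closure S = S"
  using closure_min closure_sup by blast

lemma closure_mono: "S \<subseteq> T \<Longrightarrow> zariski_closure S \<subseteq> zariski_closure T"
  using closure_min[OF closure_closed] closure_sup by blast

lemma closure_Un:
  fixes S :: "('a::{comm_semiring_1,semiring_no_zero_divisors} \<times> 'a) set"
  shows "zariski_closure (S \<union> T) = zariski_closure S \<union> zariski_closure T"
proof
  show "zariski_closure (S \<union> T) \<subseteq> zariski_closure S \<union> zariski_closure T"
    by (rule closure_min) (auto intro: closed_Un closure_closed dest: closure_sup[THEN subsetD])
  show "zariski_closure S \<union> zariski_closure T \<subseteq> zariski_closure (S \<union> T)"
    using closure_mono by blast
qed

lemma closure_empty_iff: "zariski_closure S = {} \<longleftrightarrow> S = {}"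
  using closure_sup closure_eq[OF closed_empty] by blast

lemma closure_poly:
  assumes "z \<in> zariski_closure S" "\<And>x y. (x, y) \<in> S \<Longrightarrow> eval2 g x y = 0"
  shows "eval2 g (fst z) (snd z) = 0"
proof -
  have "S \<subseteq> VV {g}" using assms(2) by (auto simp: VV_def)
  hence "zariski_closure S \<subseteq> VV {g}" by (rule closure_min[OF closed_VV])
  thus ?thesis using assms(1) by (cases z) (auto simp: VV_def)
qed

lemma irr_sub_Un:
  assumes "zariski_irreducible M" "M \<subseteq> A \<union> B" "zariski_closed A" "zariski_closed B"
  shows "M \<subseteq> A \<or> M \<subseteq> B"
proof -
  have "M = (M \<inter> A) \<union> (M \<inter> B)" using assms(2) by auto
  moreover have "zariski_closed M" using assms(1) by (simp add: zariski_irreducible_def)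
  ultimately have "M = M \<inter> A \<or> M = M \<inter> B"
    using assms(1,3,4) closed_Int unfolding zariski_irreducible_def by blast
  thus ?thesis by blast
qed

lemma irr_sub_Union:
  assumes "zariski_irreducible M" "finite \<F>" "\<forall>A\<in>\<F>. zariski_closed (A :: ('a::{comm_semiring_1,semiring_no_zero_divisors} \<times> 'a) set)"
    "M \<subseteq> \<Union>\<F>"
  shows "\<exists>A\<in>\<F>. M \<subseteq> A"
  using assms(2,3,4)
proof (induction rule: finite_induct)
  case empty thus ?case using assms(1) by (auto simp: zariski_irreducible_def)
next
  case (insert A \<F>)
  have cl: "zariski_closed (\<Union>\<F>)"
    using insert.hyps(1) insert.prems(1)
  proof (induction rule: finite_induct)
    case empty thus ?case by (simp add: closed_empty)
  next
    case (insert B \<G>) thus ?case by (auto intro: closed_Un)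
  qed
  have "M \<subseteq> A \<union> \<Union>\<F>" using insert.prems by auto
  hence "M \<subseteq> A \<or> M \<subseteq> \<Union>\<F>" using irr_sub_Un[OF assms(1)] insert.prems(1) cl by blast
  thus ?case using insert by blast
qed

lemma irr_finite_singleton:
  fixes M :: "('a::{comm_ring_1,semiring_no_zero_divisors} \<times> 'a) set"
  assumes "zariski_irreducible M" "finite M"
  shows "\<exists>Q. M = {Q}"
proof -
  obtain Q where "Q \<in> M" using assms(1) by (auto simp: zariski_irreducible_def)
  have "M = {Q} \<union> (M - {Q})" using \<open>Q \<in> M\<close> by auto
  hence "M = {Q} \<or> M = M - {Q}"
    using assms(1) closed_finite[of "{Q}"] closed_finite[of "M - {Q}"] assms(2)
    unfolding zariski_irreducible_def by blast
  thus ?thesis using \<open>Q \<in> M\<close> by blast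
qed

lemma proper_closed_sub_curve_finite:
  fixes G :: "'a::{alg_closed_field,field_char_0} poly poly"
  assumes irr: "irreducible G" and "zariski_closed Z" "Z \<subseteq> curve G" "Z \<noteq> curve G"
  shows "finite Z"
proof -
  obtain P where Z: "Z = VV P" using assms(2) by (auto simp: closed_iff)
  obtain x y where p: "(x, y) \<in> curve G" "(x, y) \<notin> Z" using assms(3,4) by auto
  then obtain g where g: "g \<in> P" "eval2 g x y \<noteq> 0" by (auto simp: Z VV_def)
  have "finite {(x,y). eval2 G x y = 0 \<and> eval2 g x y = 0}"
    using ZL_finite[OF irr _ g(2)] p by (auto simp: curve_def)
  moreover have "Z \<subseteq> {(x,y). eval2 G x y = 0 \<and> eval2 g x y = 0}"
    using assms(3) g(1) by (auto simp: Z VV_def curve_def)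
  ultimately show ?thesis using finite_subset by blast
qed

lemma curve_irreducible:
  fixes G :: "'a::{alg_closed_field,field_char_0} poly poly"
  assumes irr: "irreducible G"
  shows "zariski_irreducible (curve G)"
  unfolding zariski_irreducible_def
proof (intro conjI allI impI)
  show "curve G \<noteq> {}" using curve_infinite[OF irr] by auto
  show "zariski_closed (curve G)" by (rule closed_curve)
  fix M1 M2 assume h: "zariski_closed M1 \<and> zariski_closed M2 \<and> curve G = M1 \<union> M2"
  show "curve G = M1 \<or> curve G = M2"
  proof (rule ccontr)
    assume "\<not> (curve G = M1 \<or> curve G = M2)"
    hence "finite M1" "finite M2" using h proper_closed_sub_curve_finite[OF irr] by blast+
    thus False using h curve_infinite[OF irr] by auto
  qed
qed

lemma UNIV_irreducible:
  "zariski_irreducible (UNIV :: ('a::field_char_0 \<times> 'a) set)"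
  unfolding zariski_irreducible_def
proof (intro conjI allI impI)
  show "(UNIV :: ('a \<times> 'a) set) \<noteq> {}" by simp
  show "zariski_closed (UNIV :: ('a \<times> 'a) set)" by (rule closed_UNIV)
  fix M1 M2 :: "('a \<times> 'a) set"
  assume h: "zariski_closed M1 \<and> zariski_closed M2 \<and> UNIV = M1 \<union> M2"
  show "UNIV = M1 \<or> UNIV = M2"
  proof (rule ccontr)
    assume nn: "\<not> (UNIV = M1 \<or> UNIV = M2)"
    obtain P1 P2 where P: "M1 = VV P1" "M2 = VV P2" using h by (auto simp: closed_iff)
    obtain x1 y1 where "(x1, y1) \<notin> M1" using nn by auto
    then obtain g1 where g1: "g1 \<in> P1" "eval2 g1 x1 y1 \<noteq> 0" by (auto simp: P VV_def)
    obtain x2 y2 where "(x2, y2) \<notin> M2" using nn by auto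
    then obtain g2 where g2: "g2 \<in> P2" "eval2 g2 x2 y2 \<noteq> 0" by (auto simp: P VV_def)
    have "eval2 (g1 * g2) x y = 0" for x y
    proof -
      have "(x, y) \<in> M1 \<union> M2" using h by auto
      thus ?thesis using g1 g2 by (auto simp: P VV_def)
    qed
    hence "g1 * g2 = 0" by (rule eval2_zero_all)
    hence "g1 = 0 \<or> g2 = 0" by simp
    thus False using g1 g2 by auto
  qed
qed


definition eval3 :: "'a::comm_semiring_1 poly poly poly \<Rightarrow> 'a \<Rightarrow> 'a \<Rightarrow> 'a \<Rightarrow> 'a" where
  "eval3 h x y s = poly (map_poly (\<lambda>q. eval2 q x y) h) s"

lemma eval3_alt: "eval3 h x y s = poly (poly (poly h [:[:s:]:]) [:y:]) x"
  unfolding eval3_def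
  by (induction h) (auto simp: map_poly_pCons eval2_alt)

lemma eval3_add [simp]: "eval3 (f + g) x y s = eval3 f x y s + eval3 g x y s"
  by (simp add: eval3_alt)
lemma eval3_diff [simp]: "eval3 (f - g) x y s = eval3 f x y s - (eval3 g x y s :: 'a :: comm_ring_1)"
  by (simp add: eval3_alt)
lemma eval3_mult [simp]: "eval3 (f * g) x y s = eval3 f x y s * eval3 g x y s"
  by (simp add: eval3_alt)
lemma eval3_power [simp]: "eval3 (f ^ n) x y s = eval3 f x y s ^ n"
  by (simp add: eval3_alt poly_power)
lemma eval3_0 [simp]: "eval3 0 x y s = 0"
  by (simp add: eval3_alt)
lemma eval3_sum [simp]: "eval3 (sum g S) x y s = (\<Sum>i\<in>S. eval3 (g i) x y s)"
  by (induction S rule: infinite_finite_induct) auto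
lemma eval3_lift [simp]: "eval3 [:g:] x y s = eval2 g x y"
  by (simp add: eval3_alt eval2_alt)
lemma eval3_S [simp]: "eval3 [:0,1:] x y s = s"
  by (simp add: eval3_alt)

lemma poly_as_sum_le:
  fixes p :: "'a::comm_semiring_1 poly"
  assumes "degree p \<le> n" shows "poly p x = (\<Sum>i\<le>n. coeff p i * x ^ i)"
proof -
  have "poly p x = (\<Sum>i\<le>degree p. coeff p i * x ^ i)" by (rule poly_altdef)
  also have "\<dots> = (\<Sum>i\<le>n. coeff p i * x ^ i)"
    by (rule sum.mono_neutral_left) (use assms in \<open>auto simp: coeff_eq_0\<close>)
  finally show ?thesis .
qed

lemma eval2_sum_form:
  "eval2 g u v = (\<Sum>j\<le>degree g. \<Sum>i\<le>degree (coeff g j). coeff (coeff g j) i * u ^ i * v ^ j)"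
proof -
  have "eval2 g u v = (\<Sum>j\<le>degree g. coeff (map_poly (\<lambda>c. poly c u) g) j * v ^ j)"
    unfolding eval2_def by (rule poly_as_sum_le) (rule map_poly_degree_leq)
  also have "\<dots> = (\<Sum>j\<le>degree g. poly (coeff g j) u * v ^ j)"
    by (simp add: coeff_map_poly)
  also have "\<dots> = (\<Sum>j\<le>degree g. \<Sum>i\<le>degree (coeff g j). coeff (coeff g j) i * u ^ i * v ^ j)"
    by (simp add: poly_altdef sum_distrib_right)
  finally show ?thesis .
qed

lemma eval3_sum_form:
  "eval3 h x y s = (\<Sum>k\<le>degree h. eval2 (coeff h k) x y * s ^ k)"
proof -
  have "eval3 h x y s = (\<Sum>k\<le>degree h. coeff (map_poly (\<lambda>q. eval2 q x y) h) k * s ^ k)"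
    unfolding eval3_def by (rule poly_as_sum_le) (rule map_poly_degree_leq)
  thus ?thesis by (simp add: coeff_map_poly)
qed

definition comp3 :: "'a::comm_semiring_1 poly poly \<Rightarrow> 'a poly poly poly \<Rightarrow> 'a poly poly poly \<Rightarrow> 'a poly poly poly" where
  "comp3 g P Q = (\<Sum>j\<le>degree g. \<Sum>i\<le>degree (coeff g j). [:[:[:coeff (coeff g j) i:]:]:] * P ^ i * Q ^ j)"

lemma eval3_smult [simp]: "eval3 (smult c h) x y s = eval2 c x y * eval3 h x y s"
  by (simp add: eval3_alt eval2_alt)

lemma eval3_const [simp]: "eval3 [:[:[:c:]:]:] x y s = c"
  by (simp add: eval3_alt)

lemma eval3_comp3: "eval3 (comp3 g P Q) x y s = eval2 g (eval3 P x y s) (eval3 Q x y s)"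
  by (simp add: comp3_def eval2_sum_form mult.assoc)

lemma shift_poly:
  fixes g :: "'a::comm_ring_1 poly poly"
  shows "\<exists>h. \<forall>x y s. eval3 h x y s = eval2 g (x + c * s * (x - a)) (y + c * s * (y - b))"
proof -
  define P where "P = [:[:[:0,1:]:]:] + [:[:[:c:]:]:] * [:0,1:] * [:[:[:-a,1:]:]:]"
  define Q where "Q = [:[:0,1:]:] + [:[:[:c:]:]:] * [:0,1:] * [:[:[:-b:],1:]:]"
  have P: "eval3 P x y s = x + c * s * (x - a)" for x y s
    by (simp add: P_def eval3_alt eval2_alt algebra_simps)
  have Q: "eval3 Q x y s = y + c * s * (y - b)" for x y s
    by (simp add: Q_def eval3_alt eval2_alt algebra_simps)
  show ?thesis by (rule exI[of _ "comp3 g P Q"]) (simp add: eval3_comp3 P Q)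
qed

definition Hsum :: "'a::comm_semiring_1 poly poly poly \<Rightarrow> 'a poly poly \<Rightarrow> 'a \<Rightarrow> 'a \<Rightarrow> 'a \<Rightarrow> 'a" where
  "Hsum h Np e x y = (\<Sum>k\<le>degree h. if even k then e ^ (k div 2) * eval2 (coeff h k) x y * eval2 Np x y ^ (degree h - k div 2) else 0)"

lemma even_lemma:
  fixes h :: "'a::field_char_0 poly poly poly"
  assumes "s ^ 2 * eval2 Np x y = e"
  shows "(eval3 h x y s + eval3 h x y (-s)) * eval2 Np x y ^ degree h = 2 * Hsum h Np e x y"
proof -
  let ?N = "eval2 Np x y" and ?n = "degree h"
  have "(eval3 h x y s + eval3 h x y (-s)) * ?N ^ ?n =
        (\<Sum>k\<le>?n. eval2 (coeff h k) x y * s ^ k + eval2 (coeff h k) x y * (-s) ^ k) * ?N ^ ?n"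
    by (simp only: eval3_sum_form sum.distrib)
  also have "\<dots> = (\<Sum>k\<le>?n. eval2 (coeff h k) x y * (s ^ k + (-s) ^ k) * ?N ^ ?n)"
    by (simp add: sum_distrib_right distrib_left)
  also have "\<dots> = (\<Sum>k\<le>?n. 2 * (if even k then e ^ (k div 2) * eval2 (coeff h k) x y * ?N ^ (?n - k div 2) else 0))"
  proof (rule sum.cong[OF refl])
    fix k assume k: "k \<in> {..?n}"
    show "eval2 (coeff h k) x y * (s ^ k + (-s) ^ k) * ?N ^ ?n =
          2 * (if even k then e ^ (k div 2) * eval2 (coeff h k) x y * ?N ^ (?n - k div 2) else 0)"
    proof (cases "even k")
      case True
      then obtain j where j: "k = 2 * j" by blast
      have "j \<le> ?n" using k j by auto
      let ?c = "eval2 (coeff h k) x y"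
      have n: "?N ^ ?n = ?N ^ j * ?N ^ (?n - j)" using \<open>j \<le> ?n\<close> by (simp add: power_add[symmetric])
      have sk: "s ^ k = (s ^ 2) ^ j" by (simp add: j power_mult)
      have e1: "s ^ k * ?N ^ ?n = e ^ j * ?N ^ (?n - j)"
        by (simp add: n sk assms[symmetric] power_mult_distrib mult.assoc)
      have e2: "(-s) ^ k = s ^ k" using True by simp
      have "?c * (s ^ k + (-s) ^ k) * ?N ^ ?n = 2 * (?c * (s ^ k * ?N ^ ?n))"
        by (simp add: e2 algebra_simps)
      also have "\<dots> = 2 * (e ^ (k div 2) * ?c * ?N ^ (?n - k div 2))" using e1 j by simp
      finally show ?thesis using True by simp
    next
      case False
      thus ?thesis by simp
    qed
  qed
  also have "\<dots> = 2 * Hsum h Np e x y" by (simp add: Hsum_def sum_distrib_left)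
  finally show ?thesis .
qed

lemma Hsum_poly2: "\<exists>H. \<forall>x y. Hsum h Np e x y = eval2 H x y"
proof -
  define H where "H = (\<Sum>k\<le>degree h. if even k then [:[:e ^ (k div 2):]:] * coeff h k * Np ^ (degree h - k div 2) else 0)"
  have "Hsum h Np e x y = eval2 H x y" for x y
    unfolding H_def Hsum_def eval2_sum by (rule sum.cong[OF refl]) (simp add: eval2_alt mult.assoc)
  thus ?thesis by blast
qed

lemma Hsum_poly1: "\<exists>p. \<forall>e. Hsum h Np e x y = poly p e"
proof -
  define p where "p = (\<Sum>k\<le>degree h. if even k then monom (eval2 (coeff h k) x y * eval2 Np x y ^ (degree h - k div 2)) (k div 2) else 0)"
  have "Hsum h Np e x y = poly p e" for e
    unfolding p_def Hsum_def poly_sum by (rule sum.cong[OF refl]) (simp add: poly_monom algebra_simps)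
  thus ?thesis by blast
qed

lemma sqrt_exists:
  fixes c :: "'a::alg_closed_field"
  shows "\<exists>s. s ^ 2 = c"
proof -
  have "degree [:-c, 0, 1:] > 0" by simp
  then obtain s where "poly [:-c, 0, 1:] s = 0" using alg_closed_imp_poly_has_root by blast
  hence "s ^ 2 = c" by (simp add: power2_eq_square algebra_simps)
  thus ?thesis by blast
qed


definition mu :: "'a::zero poly poly \<Rightarrow> nat" where
  "mu g = degree g + degree (lead_coeff g)"

lemma mu_mult:
  fixes a b :: "'a::idom poly poly"
  assumes "a \<noteq> 0" "b \<noteq> 0" shows "mu (a * b) = mu a + mu b"
proof -
  have "lead_coeff a \<noteq> 0" "lead_coeff b \<noteq> 0" using assms by auto
  hence "degree (lead_coeff a * lead_coeff b) = degree (lead_coeff a) + degree (lead_coeff b)"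
    by (rule degree_mult_eq)
  moreover have "lead_coeff (a * b) = lead_coeff a * lead_coeff b" by (rule lead_coeff_mult)
  ultimately show ?thesis unfolding mu_def using degree_mult_eq[OF assms] by (metis add.assoc add.left_commute)
qed

lemma mu_pos:
  fixes b :: "'a::field poly poly"
  assumes "b \<noteq> 0" "\<not> b dvd 1" shows "mu b > 0"
proof (rule ccontr)
  assume "\<not> mu b > 0"
  hence d1: "degree b = 0" and d2: "degree (coeff b 0) = 0" by (auto simp: mu_def)
  have e1: "b = [:coeff b 0:]" using d1 by (simp add: degree_0_id)
  have e2: "coeff b 0 = [:coeff (coeff b 0) 0:]" using d2 by (simp add: degree_0_id)
  have "b = [:[:coeff (coeff b 0) 0:]:]" using e1 e2 by simp
  moreover have "coeff (coeff b 0) 0 \<noteq> 0" using assms(1) e1 e2 by (metis pCons_0_0)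
  ultimately have "b dvd 1" by (auto simp: is_unit_pp)
  thus False using assms(2) by blast
qed

lemma curve_mult: "curve (a * b) = curve a \<union> curve (b :: 'a::idom poly poly)"
  by (auto simp: curve_def)

lemma structure_aux:
  fixes g :: "'a::{alg_closed_field,field_char_0} poly poly"
  shows "g \<noteq> 0 \<Longrightarrow> zariski_closed Z \<Longrightarrow> Z \<subseteq> curve g \<Longrightarrow>
    \<exists>\<G> E. finite \<G> \<and> finite E \<and> (\<forall>G\<in>\<G>. irreducible G \<and> curve G \<subseteq> Z) \<and> Z = (\<Union>G\<in>\<G>. curve G) \<union> E"
proof (induction "mu g" arbitrary: g Z rule: less_induct)
  case (less g Z)
  show ?case
  proof (cases "g dvd 1")
    case True
    then obtain c where "c \<noteq> 0" "g = [:[:c:]:]" by (auto simp: is_unit_pp)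
    hence "curve g = {}" by (auto simp: curve_def)
    hence "Z = {}" using less.prems by auto
    thus ?thesis by (intro exI[of _ "{}"]) auto
  next
    case nu: False
    show ?thesis
    proof (cases "irreducible g")
      case True
      show ?thesis
      proof (cases "Z = curve g")
        case True
        thus ?thesis using \<open>irreducible g\<close> by (intro exI[of _ "{g}"] exI[of _ "{}"]) auto
      next
        case False
        hence "finite Z" using proper_closed_sub_curve_finite[OF \<open>irreducible g\<close> less.prems(2,3)] by blast
        thus ?thesis by (intro exI[of _ "{}"] exI[of _ Z]) auto
      qed
    next
      case False
      then obtain a b where ab: "g = a * b" "\<not> a dvd 1" "\<not> b dvd 1"
        using less.prems(1) nu unfolding irreducible_def by blast
      have "a \<noteq> 0" "b \<noteq> 0" using ab less.prems(1) by auto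
      have mua: "mu a < mu g" using mu_mult[OF \<open>a \<noteq> 0\<close> \<open>b \<noteq> 0\<close>] mu_pos[OF \<open>b \<noteq> 0\<close> ab(3)] ab(1) by simp
      have mub: "mu b < mu g" using mu_mult[OF \<open>a \<noteq> 0\<close> \<open>b \<noteq> 0\<close>] mu_pos[OF \<open>a \<noteq> 0\<close> ab(2)] ab(1) by simp
      have "\<exists>\<G> E. finite \<G> \<and> finite E \<and> (\<forall>G\<in>\<G>. irreducible G \<and> curve G \<subseteq> Z \<inter> curve a) \<and> Z \<inter> curve a = (\<Union>G\<in>\<G>. curve G) \<union> E"
        by (rule less.hyps[OF mua \<open>a \<noteq> 0\<close> closed_Int[OF less.prems(2) closed_curve]]) (rule Int_lower2)
      then obtain \<G>1 E1 where 1: "finite \<G>1" "finite E1" "\<forall>G\<in>\<G>1. irreducible G \<and> curve G \<subseteq> Z \<inter> curve a"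
          "Z \<inter> curve a = (\<Union>G\<in>\<G>1. curve G) \<union> E1" by blast
      have "\<exists>\<G> E. finite \<G> \<and> finite E \<and> (\<forall>G\<in>\<G>. irreducible G \<and> curve G \<subseteq> Z \<inter> curve b) \<and> Z \<inter> curve b = (\<Union>G\<in>\<G>. curve G) \<union> E"
        by (rule less.hyps[OF mub \<open>b \<noteq> 0\<close> closed_Int[OF less.prems(2) closed_curve]]) (rule Int_lower2)
      then obtain \<G>2 E2 where 2: "finite \<G>2" "finite E2" "\<forall>G\<in>\<G>2. irreducible G \<and> curve G \<subseteq> Z \<inter> curve b"
          "Z \<inter> curve b = (\<Union>G\<in>\<G>2. curve G) \<union> E2" by blast
      have "Z = (Z \<inter> curve a) \<union> (Z \<inter> curve b)" using less.prems(3) ab(1) curve_mult by blast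
      hence "Z = (\<Union>G\<in>\<G>1 \<union> \<G>2. curve G) \<union> (E1 \<union> E2)" using 1(4) 2(4) by blast
      moreover have "\<forall>G\<in>\<G>1 \<union> \<G>2. irreducible G \<and> curve G \<subseteq> Z" using 1(3) 2(3) by blast
      ultimately show ?thesis using 1(1,2) 2(1,2) by (intro exI[of _ "\<G>1 \<union> \<G>2"] exI[of _ "E1 \<union> E2"]) auto
    qed
  qed
qed

lemma structure_thm:
  fixes Z :: "('a::{alg_closed_field,field_char_0} \<times> 'a) set"
  assumes "zariski_closed Z" "Z \<noteq> UNIV"
  shows "\<exists>\<G> E. finite \<G> \<and> finite E \<and> (\<forall>G\<in>\<G>. irreducible G \<and> curve G \<subseteq> Z) \<and> Z = (\<Union>G\<in>\<G>. curve G) \<union> E"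
proof -
  obtain P where P: "Z = VV P" using assms(1) by (auto simp: closed_iff)
  obtain x y where "(x, y) \<notin> Z" using assms(2) by auto
  then obtain g where g: "g \<in> P" "eval2 g x y \<noteq> 0" by (auto simp: P VV_def)
  have "g \<noteq> 0" using g by auto
  have "Z \<subseteq> curve g" using g(1) by (auto simp: P VV_def curve_def)
  thus ?thesis using structure_aux[OF \<open>g \<noteq> 0\<close> assms(1)] by blast
qed

lemma closed_Union_finite:
  fixes \<F> :: "('a::{comm_semiring_1,semiring_no_zero_divisors} \<times> 'a) set set"
  shows "finite \<F> \<Longrightarrow> \<forall>A\<in>\<F>. zariski_closed A \<Longrightarrow> zariski_closed (\<Union>\<F>)"
proof (induction rule: finite_induct)
  case empty thus ?case by (simp add: closed_empty)
next
  case (insert B \<G>) thus ?case by (auto intro: closed_Un)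
qed


definition Nf :: "'a::comm_ring_1 \<Rightarrow> 'a \<Rightarrow> 'a \<Rightarrow> 'a \<Rightarrow> 'a" where
  "Nf a b x y = (x - a)^2 + (y - b)^2"

definition Np :: "'a::comm_ring_1 \<Rightarrow> 'a \<Rightarrow> 'a poly poly" where
  "Np a b = [:[:-a,1:]:]^2 + [:[:-b:],1:]^2"

lemma eval2_Np [simp]: "eval2 (Np a b) x y = Nf a b x y"
  by (simp add: Np_def Nf_def eval2_alt)

definition PreS :: "'a::field poly poly \<Rightarrow> 'a \<Rightarrow> 'a \<Rightarrow> 'a \<Rightarrow> 'a \<times> 'a \<Rightarrow> ('a \<times> 'a) set" where
  "PreS f a b d Q = {(x,y). eval2 f x y = 0 \<and> Nf a b x y \<noteq> 0 \<and>
      (\<exists>s. s^2 * Nf a b x y = d^2 \<and> Q = (x + s*(x-a), y + s*(y-b)))}"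

lemma param:
  fixes a b x y q1 q2 d :: "'a::field"
  assumes N: "Nf a b x y \<noteq> 0"
  shows "((q1-x)^2 + (q2-y)^2 = d^2 \<and> (y-b)*(q1-x) - (x-a)*(q2-y) = 0) \<longleftrightarrow>
         (\<exists>s. s^2 * Nf a b x y = d^2 \<and> q1 = x + s*(x-a) \<and> q2 = y + s*(y-b))"
proof
  assume h: "(q1-x)^2 + (q2-y)^2 = d^2 \<and> (y-b)*(q1-x) - (x-a)*(q2-y) = 0"
  define u1 where "u1 = q1 - x"
  define u2 where "u2 = q2 - y"
  define v1 where "v1 = x - a"
  define v2 where "v2 = y - b"
  have NN: "Nf a b x y = v1^2 + v2^2" by (simp add: Nf_def v1_def v2_def)
  have cr: "v2 * u1 - v1 * u2 = 0" using h by (simp add: u1_def u2_def v1_def v2_def)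
  have dd: "u1^2 + u2^2 = d^2" using h by (simp add: u1_def u2_def)
  define s where "s = (u1*v1 + u2*v2) / Nf a b x y"
  have i1: "u1 * (v1^2 + v2^2) - (u1*v1 + u2*v2) * v1 = v2 * (v2 * u1 - v1 * u2)"
    by (simp add: power2_eq_square algebra_simps)
  have i2: "u2 * (v1^2 + v2^2) - (u1*v1 + u2*v2) * v2 = - v1 * (v2 * u1 - v1 * u2)"
    by (simp add: power2_eq_square algebra_simps)
  have s1: "s * v1 = u1"
  proof -
    have "u1 * Nf a b x y = (u1*v1 + u2*v2) * v1" using i1 cr NN by simp
    thus ?thesis using N by (simp add: s_def field_simps)
  qed
  have s2: "s * v2 = u2"
  proof -
    have "u2 * Nf a b x y = (u1*v1 + u2*v2) * v2" using i2 cr NN by simp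
    thus ?thesis using N by (simp add: s_def field_simps)
  qed
  have "s^2 * Nf a b x y = (s*v1)^2 + (s*v2)^2" by (simp add: NN power_mult_distrib algebra_simps)
  also have "\<dots> = d^2" using s1 s2 dd by simp
  finally show "\<exists>s. s^2 * Nf a b x y = d^2 \<and> q1 = x + s*(x-a) \<and> q2 = y + s*(y-b)"
    using s1 s2 by (intro exI[of _ s]) (simp add: u1_def u2_def v1_def v2_def)
next
  assume "\<exists>s. s^2 * Nf a b x y = d^2 \<and> q1 = x + s*(x-a) \<and> q2 = y + s*(y-b)"
  then obtain s where s: "s^2 * Nf a b x y = d^2" "q1 = x + s*(x-a)" "q2 = y + s*(y-b)" by blast
  have e1: "q1 - x = s*(x-a)" "q2 - y = s*(y-b)" using s by simp_all
  have "(s*(x-a))^2 + (s*(y-b))^2 = s^2 * Nf a b x y" by (simp add: Nf_def power_mult_distrib distrib_left)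
  thus "(q1-x)^2 + (q2-y)^2 = d^2 \<and> (y-b)*(q1-x) - (x-a)*(q2-y) = 0"
    unfolding e1 using s(1) by (simp add: mult.commute mult.left_commute)
qed

lemma B_mem:
  "((q1,q2),(x,y),w) \<in> conchoid_B f (a,b) d \<longleftrightarrow>
     eval2 f x y = 0 \<and> (q1-x)^2 + (q2-y)^2 = d^2 \<and> (y-b)*(q1-x) - (x-a)*(q2-y) = 0 \<and> w * Nf a b x y = 1"
  by (simp add: conchoid_B_def Nf_def)

lemma fiber_eq:
  fixes f :: "'a::field poly poly"
  shows "pi2 ` (pi1 -` {Q} \<inter> conchoid_B f (a,b) d) = PreS f a b d Q"
proof (intro set_eqI iffI)
  fix p assume "p \<in> pi2 ` (pi1 -` {Q} \<inter> conchoid_B f (a,b) d)"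
  then obtain z where z: "z \<in> pi1 -` {Q} \<inter> conchoid_B f (a,b) d" "p = pi2 z" by (rule imageE)
  obtain q1 q2 x y w where zz: "z = ((q1,q2),(x,y),w)" by (metis prod.collapse)
  have e0: "pi1 z = Q" "z \<in> conchoid_B f (a,b) d" using z(1) by simp_all
  have e: "Q = (q1,q2)" "p = (x,y)" "((q1,q2),(x,y),w) \<in> conchoid_B f (a,b) d"
    using e0 z(2) unfolding zz pi1_def pi2_def by simp_all
  hence h: "eval2 f x y = 0" "(q1-x)^2 + (q2-y)^2 = d^2" "(y-b)*(q1-x) - (x-a)*(q2-y) = 0" "w * Nf a b x y = 1"
    by (auto simp: B_mem)
  have N: "Nf a b x y \<noteq> 0" using h(4) by auto
  then obtain s where "s^2 * Nf a b x y = d^2 \<and> q1 = x + s*(x-a) \<and> q2 = y + s*(y-b)"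
    using param[OF N] h(2,3) by blast
  thus "p \<in> PreS f a b d Q" using e h(1) N by (auto simp: PreS_def)
next
  fix p assume "p \<in> PreS f a b d Q"
  then obtain x y s where e: "p = (x,y)" "eval2 f x y = 0" "Nf a b x y \<noteq> 0" "s^2 * Nf a b x y = d^2"
      "Q = (x + s*(x-a), y + s*(y-b))"
    by (auto simp: PreS_def)
  define q1 where "q1 = x + s*(x-a)"
  define q2 where "q2 = y + s*(y-b)"
  have "(q1-x)^2 + (q2-y)^2 = d^2 \<and> (y-b)*(q1-x) - (x-a)*(q2-y) = 0"
    using param[OF e(3), of q1 q2 d] e(4) q1_def q2_def by blast
  hence "((q1,q2),(x,y), inverse (Nf a b x y)) \<in> conchoid_B f (a,b) d"
    using e(2,3) by (simp add: B_mem)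
  moreover have "Q = (q1, q2)" using e(5) q1_def q2_def by simp
  ultimately have "((q1,q2),(x,y), inverse (Nf a b x y)) \<in> pi1 -` {Q} \<inter> conchoid_B f (a,b) d"
    by (simp add: pi1_def)
  moreover have "p = pi2 ((q1,q2),(x,y), inverse (Nf a b x y))" using e(1) by (simp add: pi2_def)
  ultimately show "p \<in> pi2 ` (pi1 -` {Q} \<inter> conchoid_B f (a,b) d)" by (rule rev_image_eqI)
qed

lemma T_iff:
  fixes f :: "'a::field poly poly"
  shows "Q \<in> pi1 ` conchoid_B f (a,b) d \<longleftrightarrow> PreS f a b d Q \<noteq> {}"
proof -
  have "Q \<in> pi1 ` conchoid_B f (a,b) d \<longleftrightarrow> (pi1 -` {Q} \<inter> conchoid_B f (a,b) d) \<noteq> {}"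
  proof
    assume "Q \<in> pi1 ` conchoid_B f (a,b) d"
    then obtain z where "z \<in> conchoid_B f (a,b) d" "Q = pi1 z" by (rule imageE)
    hence "z \<in> pi1 -` {Q} \<inter> conchoid_B f (a,b) d" by simp
    thus "(pi1 -` {Q} \<inter> conchoid_B f (a,b) d) \<noteq> {}" by auto
  next
    assume "(pi1 -` {Q} \<inter> conchoid_B f (a,b) d) \<noteq> {}"
    then obtain z where "z \<in> pi1 -` {Q} \<inter> conchoid_B f (a,b) d" by blast
    hence z: "pi1 z = Q" "z \<in> conchoid_B f (a,b) d" by simp_all
    show "Q \<in> pi1 ` conchoid_B f (a,b) d" by (rule image_eqI[where x = z]) (simp_all only: z)
  qed
  hence "Q \<in> pi1 ` conchoid_B f (a,b) d \<longleftrightarrow> pi2 ` (pi1 -` {Q} \<inter> conchoid_B f (a,b) d) \<noteq> {}"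
    by (simp only: image_is_empty)
  thus ?thesis by (simp add: fiber_eq)
qed

lemma T_mem_iff:
  fixes f :: "'a::field poly poly"
  shows "Q \<in> pi1 ` conchoid_B f (a,b) d \<longleftrightarrow>
    (\<exists>x y s. eval2 f x y = 0 \<and> Nf a b x y \<noteq> 0 \<and> s^2 * Nf a b x y = d^2 \<and> Q = (x + s*(x-a), y + s*(y-b)))"
  by (auto simp: T_iff PreS_def)


lemma preS_finite:
  fixes f :: "'a::field_char_0 poly poly"
  assumes d: "d \<noteq> 0" and circfin: "finite {(x,y). eval2 f x y = 0 \<and> Nf a b x y = d^2}"
  shows "finite (PreS f a b d Q)"
proof -
  obtain q1 q2 where Q: "Q = (q1, q2)" by (cases Q)
  show ?thesis
  proof (cases "Q = (a, b)")
    case True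
    have "PreS f a b d Q \<subseteq> {(x,y). eval2 f x y = 0 \<and> Nf a b x y = d^2}"
    proof clarify
      fix x y assume "(x, y) \<in> PreS f a b d Q"
      then obtain s where h: "eval2 f x y = 0" "Nf a b x y \<noteq> 0" "s^2 * Nf a b x y = d^2"
          "a = x + s*(x-a)" "b = y + s*(y-b)" using True by (auto simp: PreS_def)
      have e1: "(1+s) * (x-a) = 0" using h(4) by (simp add: algebra_simps)
      have e2: "(1+s) * (y-b) = 0" using h(5) by (simp add: algebra_simps)
      have "1 + s = 0"
      proof (rule ccontr)
        assume "1 + s \<noteq> 0"
        hence "x = a" "y = b" using e1 e2 by auto
        thus False using h(2) by (simp add: Nf_def)
      qed
      hence "s = -1" by (simp add: add_eq_0_iff)
      thus "eval2 f x y = 0 \<and> Nf a b x y = d^2" using h by simp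
    qed
    thus ?thesis using circfin finite_subset by blast
  next
    case False
    define NQ where "NQ = Nf a b q1 q2"
    define qq where "qq = [:-(d^2), -2*d^2, NQ - d^2:]"
    have "qq \<noteq> 0" using d by (simp add: qq_def)
    define g where "g s = (a + (q1-a)/(1+s), b + (q2-b)/(1+s))" for s
    have "PreS f a b d Q \<subseteq> g ` {s. poly qq s = 0}"
    proof clarify
      fix x y assume "(x, y) \<in> PreS f a b d Q"
      then obtain s where h: "eval2 f x y = 0" "Nf a b x y \<noteq> 0" "s^2 * Nf a b x y = d^2"
          "q1 = x + s*(x-a)" "q2 = y + s*(y-b)" using Q by (auto simp: PreS_def)
      have e1: "q1 - a = (1+s) * (x-a)" using h(4) by (simp add: algebra_simps)
      have e2: "q2 - b = (1+s) * (y-b)" using h(5) by (simp add: algebra_simps)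
      have s1: "1 + s \<noteq> 0"
      proof
        assume "1 + s = 0"
        hence "q1 = a" "q2 = b" using e1 e2 by auto
        thus False using False Q by simp
      qed
      have "x = a + (q1-a)/(1+s)" "y = b + (q2-b)/(1+s)" using e1 e2 s1 by (simp_all add: field_simps)
      hence "(x, y) = g s" by (simp add: g_def)
      moreover have "poly qq s = 0"
      proof -
        have "NQ = ((1+s)*(x-a))^2 + ((1+s)*(y-b))^2" unfolding NQ_def Nf_def e1 e2 by (rule refl)
        hence "NQ = (1+s)^2 * Nf a b x y" by (simp add: Nf_def power_mult_distrib distrib_left)
        hence "poly qq s = s^2 * ((1+s)^2 * Nf a b x y) - d^2 * (1+s)^2"
          by (simp add: qq_def power2_eq_square algebra_simps)
        also have "\<dots> = (1+s)^2 * (s^2 * Nf a b x y - d^2)" by (simp add: algebra_simps)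
        also have "\<dots> = 0" using h(3) by simp
        finally show ?thesis .
      qed
      ultimately show "(x, y) \<in> g ` {s. poly qq s = 0}" by blast
    qed
    thus ?thesis using poly_roots_finite[OF \<open>qq \<noteq> 0\<close>] finite_subset by blast
  qed
qed

lemma C0_infinite:
  fixes f :: "'a::{alg_closed_field,field_char_0} poly poly"
  assumes irr: "irreducible f" and p0: "eval2 f x0 y0 = 0" "Nf a b x0 y0 \<noteq> 0"
  shows "infinite {(x,y). eval2 f x y = 0 \<and> Nf a b x y \<noteq> 0}"
proof
  assume fin: "finite {(x,y). eval2 f x y = 0 \<and> Nf a b x y \<noteq> 0}"
  have "finite {(x,y). eval2 f x y = 0 \<and> eval2 (Np a b) x y = 0}"
    by (rule ZL_finite[OF irr p0(1)]) (use p0 in simp)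
  hence "finite ({(x,y). eval2 f x y = 0 \<and> Nf a b x y \<noteq> 0} \<union> {(x,y). eval2 f x y = 0 \<and> eval2 (Np a b) x y = 0})"
    using fin by simp
  moreover have "curve f \<subseteq> {(x,y). eval2 f x y = 0 \<and> Nf a b x y \<noteq> 0} \<union> {(x,y). eval2 f x y = 0 \<and> eval2 (Np a b) x y = 0}"
    by (auto simp: curve_def)
  ultimately show False using curve_infinite[OF irr] finite_subset by blast
qed

lemma circfin_from:
  fixes f :: "'a::{alg_closed_field,field_char_0} poly poly"
  assumes irr: "irreducible f" and p0: "eval2 f x0 y0 = 0" "Nf a b x0 y0 \<noteq> d^2"
  shows "finite {(x,y). eval2 f x y = 0 \<and> Nf a b x y = d^2}"
proof -
  have ev: "eval2 (Np a b - [:[:d^2:]:]) x y = Nf a b x y - d^2" for x y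
    by (simp only: eval2_diff eval2_Np eval2_const)
  have "eval2 (Np a b - [:[:d^2:]:]) x0 y0 \<noteq> 0" using p0(2) by (simp add: ev)
  hence "finite {(x,y). eval2 f x y = 0 \<and> eval2 (Np a b - [:[:d^2:]:]) x y = 0}"
    by (rule ZL_finite[OF irr p0(1)])
  moreover have "{(x,y). eval2 f x y = 0 \<and> Nf a b x y = d^2} \<subseteq> {(x,y). eval2 f x y = 0 \<and> eval2 (Np a b - [:[:d^2:]:]) x y = 0}"
    by (auto simp add: ev)
  ultimately show ?thesis by (rule finite_subset[rotated])
qed

definition Ysd :: "'a::field poly poly \<Rightarrow> 'a \<Rightarrow> 'a \<Rightarrow> 'a \<Rightarrow> ('a \<times> 'a \<times> 'a) set" where
  "Ysd f a b d = {(x,y,s). eval2 f x y = 0 \<and> Nf a b x y \<noteq> 0 \<and> s^2 * Nf a b x y = d^2 \<and>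
      eval2 f (x + 2*s*(x-a)) (y + 2*s*(y-b)) = 0}"

lemma card_ne_1_two:
  assumes "S \<noteq> {}" "card S \<noteq> 1" shows "\<exists>p\<in>S. \<exists>q\<in>S. p \<noteq> q"
proof (rule ccontr)
  assume "\<not> ?thesis"
  then obtain p where "S = {p}" using assms(1) by blast
  thus False using assms(2) by simp
qed

lemma double_point:
  fixes f :: "'a::field_char_0 poly poly"
  assumes T: "Q \<in> pi1 ` conchoid_B f (a,b) d" and QA: "Q \<noteq> (a,b)" and c: "card (PreS f a b d Q) \<noteq> 1"
  shows "Q \<in> (\<lambda>(x,y,s). (x + s*(x-a), y + s*(y-b))) ` Ysd f a b d"
proof -
  have "PreS f a b d Q \<noteq> {}" using T by (simp add: T_iff)
  then obtain p1 p2 where p: "p1 \<in> PreS f a b d Q" "p2 \<in> PreS f a b d Q" "p1 \<noteq> p2"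
    using card_ne_1_two[OF _ c] by blast
  obtain x y s where h: "p1 = (x,y)" "eval2 f x y = 0" "Nf a b x y \<noteq> 0" "s^2 * Nf a b x y = d^2"
      "Q = (x + s*(x-a), y + s*(y-b))" using p(1) by (auto simp: PreS_def)
  obtain x' y' s' where h': "p2 = (x',y')" "eval2 f x' y' = 0" "Nf a b x' y' \<noteq> 0" "s'^2 * Nf a b x' y' = d^2"
      "Q = (x' + s'*(x'-a), y' + s'*(y'-b))" using p(2) by (auto simp: PreS_def)
  define u1 where "u1 = x - a"
  define u2 where "u2 = y - b"
  define w1 where "w1 = x' - a"
  define w2 where "w2 = y' - b"
  have hq1: "(1+s)*u1 = (1+s')*w1" using h(5) h'(5) by (simp add: u1_def w1_def algebra_simps)
  have hq2: "(1+s)*u2 = (1+s')*w2" using h(5) h'(5) by (simp add: u2_def w2_def algebra_simps)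
  have s0: "1 + s \<noteq> 0"
  proof
    assume "1 + s = 0"
    hence "Q = (a, b)" using h(5) by (simp add: algebra_simps add_eq_0_iff)
    thus False using QA by simp
  qed
  have s0': "1 + s' \<noteq> 0"
  proof
    assume "1 + s' = 0"
    hence "Q = (a, b)" using h'(5) by (simp add: algebra_simps add_eq_0_iff)
    thus False using QA by simp
  qed
  define l where "l = (1+s)/(1+s')"
  have w1: "w1 = l * u1" using hq1 s0' by (simp add: l_def field_simps)
  have w2: "w2 = l * u2" using hq2 s0' by (simp add: l_def field_simps)
  have N: "Nf a b x y = u1^2 + u2^2" by (simp add: Nf_def u1_def u2_def)
  have N': "Nf a b x' y' = l^2 * (u1^2 + u2^2)"
    by (simp add: Nf_def w1_def[symmetric] w2_def[symmetric] w1 w2 power_mult_distrib algebra_simps)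
  have "(s' * l)^2 * Nf a b x y = s^2 * Nf a b x y"
    using h(4) h'(4) N N' by (simp add: power_mult_distrib algebra_simps)
  hence sq: "(s' * l)^2 = s^2" using h(3) by simp
  have ll: "l * (1 + s') = 1 + s" using s0' by (simp add: l_def)
  have "(s' * l - s) * (s' * l + s) = 0" using sq by (simp add: power2_eq_square algebra_simps)
  hence "s' * l = s \<or> s' * l = -s" by (auto simp add: add_eq_0_iff)
  thus ?thesis
  proof
    assume "s' * l = s"
    hence "l = 1" using ll by (simp add: algebra_simps)
    hence "x' = x" "y' = y" using w1 w2 by (simp_all add: u1_def u2_def w1_def w2_def)
    thus ?thesis using p(3) h(1) h'(1) by simp
  next
    assume "s' * l = -s"
    hence l: "l = 1 + 2*s" using ll by (simp add: algebra_simps)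
    have "x' = x + 2*s*(x-a)" "y' = y + 2*s*(y-b)"
      using w1 w2 l by (simp_all add: u1_def u2_def w1_def w2_def algebra_simps)
    hence "(x, y, s) \<in> Ysd f a b d" using h h'(2) by (simp add: Ysd_def)
    thus ?thesis using h(5) by force
  qed
qed

lemma Ysd_finite:
  fixes f :: "'a::field_char_0 poly poly"
  assumes d: "d \<noteq> 0" and Y: "finite {(x,y). \<exists>s. (x,y,s) \<in> Ysd f a b d}"
  shows "finite (Ysd f a b d)"
proof -
  let ?Y = "{(x,y). \<exists>s. (x,y,s) \<in> Ysd f a b d}"
  let ?S = "\<lambda>p. {s. poly [:-(d^2), 0, Nf a b (fst p) (snd p):] s = 0}"
  have "Ysd f a b d \<subseteq> (\<lambda>(p,s). (fst p, snd p, s)) ` Sigma ?Y ?S"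
  proof clarify
    fix x y s assume h: "(x, y, s) \<in> Ysd f a b d"
    hence "poly [:-(d^2), 0, Nf a b x y:] s = 0" by (simp add: Ysd_def power2_eq_square algebra_simps)
    hence "((x,y),s) \<in> Sigma ?Y ?S" using h by auto
    thus "(x, y, s) \<in> (\<lambda>(p,s). (fst p, snd p, s)) ` Sigma ?Y ?S" by force
  qed
  moreover have "finite (Sigma ?Y ?S)"
  proof (rule finite_SigmaI[OF Y])
    fix p assume "p \<in> ?Y"
    then obtain x y s where "p = (x,y)" "(x,y,s) \<in> Ysd f a b d" by auto
    hence "Nf a b (fst p) (snd p) \<noteq> 0" by (simp add: Ysd_def)
    hence "[:-(d^2), 0, Nf a b (fst p) (snd p):] \<noteq> 0" by simp
    thus "finite (?S p)" by (rule poly_roots_finite)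
  qed
  ultimately show ?thesis using finite_subset by blast
qed


definition hsh :: "'a::comm_ring_1 \<Rightarrow> 'a poly poly \<Rightarrow> 'a \<Rightarrow> 'a \<Rightarrow> 'a poly poly poly" where
  "hsh c g a b = (SOME h. \<forall>x y s. eval3 h x y s = eval2 g (x + c * s * (x - a)) (y + c * s * (y - b)))"

lemma hsh_eval: "eval3 (hsh c g a b) x y s = eval2 g (x + c * s * (x - a)) (y + c * s * (y - b))"
proof -
  have "\<forall>x y s. eval3 (hsh c g a b) x y s = eval2 g (x + c * s * (x - a)) (y + c * s * (y - b))"
    unfolding hsh_def by (rule someI_ex[OF shift_poly])
  thus ?thesis by blast
qed

definition hh :: "'a::comm_ring_1 poly poly \<Rightarrow> 'a \<Rightarrow> 'a \<Rightarrow> 'a poly poly poly" where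
  "hh f a b = hsh 2 f a b * hsh (-2) f a b"

definition FF :: "'a::comm_ring_1 poly poly \<Rightarrow> 'a \<Rightarrow> 'a \<Rightarrow> 'a \<Rightarrow> 'a \<Rightarrow> 'a \<Rightarrow> 'a" where
  "FF f a b x y s = eval2 f (x + 2 * s * (x - a)) (y + 2 * s * (y - b))"

lemma eval3_hh: "eval3 (hh f a b) x y s = FF f a b x y s * FF f a b x y (-s)"
  by (simp add: hh_def hsh_eval FF_def)

lemma rho_Hsum:
  fixes f :: "'a::field_char_0 poly poly"
  assumes "s^2 * Nf a b x y = e"
  shows "FF f a b x y s * FF f a b x y (-s) * Nf a b x y ^ degree (hh f a b) = Hsum (hh f a b) (Np a b) e x y"
proof -
  have "(eval3 (hh f a b) x y s + eval3 (hh f a b) x y (-s)) * eval2 (Np a b) x y ^ degree (hh f a b) =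
        2 * Hsum (hh f a b) (Np a b) e x y"
    by (rule even_lemma) (use assms in simp)
  hence "2 * (FF f a b x y s * FF f a b x y (-s) * Nf a b x y ^ degree (hh f a b)) = 2 * Hsum (hh f a b) (Np a b) e x y"
    by (simp add: eval3_hh algebra_simps)
  thus ?thesis by simp
qed

definition BadE :: "'a::field_char_0 poly poly \<Rightarrow> 'a \<Rightarrow> 'a \<Rightarrow> 'a set" where
  "BadE f a b = {e. \<forall>x y. eval2 f x y = 0 \<and> Nf a b x y \<noteq> 0 \<longrightarrow> Hsum (hh f a b) (Np a b) e x y = 0}"

lemma infinite_UNIV_split:
  fixes r :: "'a::field_char_0 poly"
  assumes "\<And>s. poly r s * poly r (-s) = 0"
  shows "r = 0"
proof (rule ccontr)
  assume "r \<noteq> 0"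
  hence f1: "finite {s. poly r s = 0}" by (rule poly_roots_finite)
  hence "finite (uminus ` {s. poly r s = 0})" by simp
  moreover have "{s. poly r (-s) = 0} \<subseteq> uminus ` {s. poly r s = 0}"
    by (auto intro: image_eqI[where x = "- _"])
  ultimately have f2: "finite {s. poly r (-s) = 0}" using finite_subset by blast
  have "UNIV = {s. poly r s = 0} \<union> {s. poly r (-s) = 0}" using assms by auto
  hence "finite (UNIV :: 'a set)" using f1 f2 by (metis finite_UnI)
  thus False using infinite_UNIV_char_0 by blast
qed

lemma BadE_finite:
  fixes f :: "'a::{alg_closed_field,field_char_0} poly poly"
  assumes irr: "irreducible f" and p0: "eval2 f x0 y0 = 0" "Nf a b x0 y0 \<noteq> 0"
    and nl: "\<not> line_through (a, b) (curve f)"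
  shows "finite (BadE f a b)"
proof (rule ccontr)
  assume inf: "infinite (BadE f a b)"
  obtain p where p: "\<And>e. Hsum (hh f a b) (Np a b) e x0 y0 = poly p e" using Hsum_poly1 by blast
  have "BadE f a b \<subseteq> {e. poly p e = 0}" using p0 by (auto simp: BadE_def p[symmetric])
  hence "p = 0" using inf poly_roots_finite finite_subset by blast
  hence H0: "\<And>e. Hsum (hh f a b) (Np a b) e x0 y0 = 0" using p by simp
  define r where "r = map_poly (\<lambda>q. eval2 q x0 y0) (hsh 2 f a b)"
  have r: "poly r s = FF f a b x0 y0 s" for s
    using hsh_eval[of 2 f a b x0 y0 s] by (simp add: r_def eval3_def FF_def)
  have "poly r s * poly r (-s) = 0" for s
  proof -
    have "FF f a b x0 y0 s * FF f a b x0 y0 (-s) * Nf a b x0 y0 ^ degree (hh f a b) = 0"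
      using rho_Hsum[of s a b x0 y0 "s^2 * Nf a b x0 y0" f] H0 by simp
    thus ?thesis using p0(2) by (simp add: r)
  qed
  hence "r = 0" by (rule infinite_UNIV_split)
  hence line: "eval2 f (x0 + t * (x0 - a)) (y0 + t * (y0 - b)) = 0" for t
  proof -
    have "FF f a b x0 y0 (t/2) = 0" using \<open>r = 0\<close> r[of "t/2"] by simp
    thus ?thesis by (simp add: FF_def)
  qed
  define v1 where "v1 = x0 - a"
  define v2 where "v2 = y0 - b"
  have v: "(v1, v2) \<noteq> (0, 0)" using p0(2) by (auto simp: Nf_def v1_def v2_def)
  define lf where "lf = [:[:-(v2*a) + v1*b, v2:], [:-v1:]:]"
  have ell: "eval2 lf x y = v2 * (x - a) - v1 * (y - b)" for x y
    by (simp add: lf_def eval2_alt algebra_simps)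
  define L where "L t = (x0 + t * v1, y0 + t * v2)" for t
  have "inj L" using v by (auto simp: inj_def L_def)
  hence "infinite (range L)" using infinite_UNIV_char_0 finite_imageD by blast
  moreover have "range L \<subseteq> {(x,y). eval2 f x y = 0 \<and> eval2 lf x y = 0}"
    using line by (auto simp: L_def ell v1_def v2_def algebra_simps)
  ultimately have inf2: "infinite {(x,y). eval2 f x y = 0 \<and> eval2 lf x y = 0}"
    using finite_subset by blast
  have "curve f = {(y1, y2). v2 * (y1 - a) + (-v1) * (y2 - b) = 0}"
  proof (intro set_eqI iffI)
    fix z assume "z \<in> curve f"
    then obtain x y where z: "z = (x,y)" "eval2 f x y = 0" by (auto simp: curve_def)
    have "eval2 lf x y = 0" by (rule ZL[OF irr inf2 z(2)])
    thus "z \<in> {(y1, y2). v2 * (y1 - a) + (-v1) * (y2 - b) = 0}" using z by (simp add: ell)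
  next
    fix z assume "z \<in> {(y1, y2). v2 * (y1 - a) + (-v1) * (y2 - b) = 0}"
    then obtain x y where z: "z = (x,y)" and e: "v2 * (x - a) = v1 * (y - b)" by auto
    show "z \<in> curve f"
    proof (cases "v1 = 0")
      case False
      define t where "t = (x - a) / v1 - 1"
      have "x = x0 + t * v1" using False by (simp add: t_def v1_def field_simps)
      moreover have "y = y0 + t * v2"
      proof -
        have "t * v2 = ((x - a) * v2) / v1 - v2" using False by (simp add: t_def field_simps)
        also have "\<dots> = y - b - v2" using False e by (simp add: field_simps)
        finally show ?thesis by (simp add: v2_def)
      qed
      ultimately show ?thesis using line[of t] z by (simp add: curve_def v1_def v2_def)
    next
      case True
      hence "v2 \<noteq> 0" using v by simp
      define t where "t = (y - b) / v2 - 1"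
      have "y = y0 + t * v2" using \<open>v2 \<noteq> 0\<close> by (simp add: t_def v2_def field_simps)
      moreover have "x = x0 + t * v1"
      proof -
        have "x - a = 0" using e True \<open>v2 \<noteq> 0\<close> by simp
        thus ?thesis using True by (simp add: v1_def)
      qed
      ultimately show ?thesis using line[of t] z by (simp add: curve_def v1_def v2_def)
    qed
  qed
  hence "line_through (a, b) (curve f)" unfolding line_through_def using v
    by (intro exI[of _ v2] exI[of _ "-v1"]) auto
  thus False using nl by blast
qed

lemma Y_finite:
  fixes f :: "'a::{alg_closed_field,field_char_0} poly poly"
  assumes irr: "irreducible f" and nb: "d^2 \<notin> BadE f a b"
  shows "finite {(x,y). \<exists>s. (x,y,s) \<in> Ysd f a b d}"
proof -
  obtain x1 y1 where p1: "eval2 f x1 y1 = 0" "Nf a b x1 y1 \<noteq> 0" "Hsum (hh f a b) (Np a b) (d^2) x1 y1 \<noteq> 0"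
    using nb by (auto simp: BadE_def)
  obtain H where H: "\<And>x y. Hsum (hh f a b) (Np a b) (d^2) x y = eval2 H x y" using Hsum_poly2 by blast
  have fin: "finite {(x,y). eval2 f x y = 0 \<and> eval2 H x y = 0}"
    by (rule ZL_finite[OF irr p1(1)]) (use p1(3) H in simp)
  have "{(x,y). \<exists>s. (x,y,s) \<in> Ysd f a b d} \<subseteq> {(x,y). eval2 f x y = 0 \<and> eval2 H x y = 0}"
  proof clarify
    fix x y s assume h: "(x, y, s) \<in> Ysd f a b d"
    hence "FF f a b x y s = 0" "eval2 f x y = 0" "s^2 * Nf a b x y = d^2" by (simp_all add: Ysd_def FF_def)
    hence "Hsum (hh f a b) (Np a b) (d^2) x y = 0" using rho_Hsum[of s a b x y "d^2" f] by simp
    thus "eval2 f x y = 0 \<and> eval2 H x y = 0" using \<open>eval2 f x y = 0\<close> H by simp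
  qed
  thus ?thesis using fin finite_subset by blast
qed


lemma dense:
  fixes f g :: "'a::{alg_closed_field,field_char_0} poly poly"
  assumes irr: "irreducible f" and p0: "eval2 f x0 y0 = 0" "Nf a b x0 y0 \<noteq> 0"
    and d: "d \<noteq> 0" and circfin: "finite {(x,y). eval2 f x y = 0 \<and> Nf a b x y = d^2}"
    and E: "finite E"
    and van: "\<And>q1 q2. (q1, q2) \<in> pi1 ` conchoid_B f (a,b) d - E \<Longrightarrow> eval2 g q1 q2 = 0"
    and Q: "(q1, q2) \<in> pi1 ` conchoid_B f (a,b) d"
  shows "eval2 g q1 q2 = 0"
proof -
  let ?T = "pi1 ` conchoid_B f (a,b) d"
  define h1 where "h1 = hsh 1 g a b"
  have psi: "eval3 h1 x y s = eval2 g (x + s * (x - a)) (y + s * (y - b))" for x y s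
    by (simp add: h1_def hsh_eval)
  obtain HA where HA: "\<And>x y. Hsum h1 (Np a b) (d^2) x y = eval2 HA x y" using Hsum_poly2 by blast
  obtain HB where HB: "\<And>x y. Hsum (h1 * h1) (Np a b) (d^2) x y = eval2 HB x y" using Hsum_poly2 by blast
  have evA: "(eval3 h1 x y s + eval3 h1 x y (-s)) * Nf a b x y ^ degree h1 = 2 * eval2 HA x y"
    if "s^2 * Nf a b x y = d^2" for x y s
    using even_lemma[of s "Np a b" x y "d^2" h1] that by (simp add: HA)
  have evB: "(eval3 h1 x y s ^ 2 + eval3 h1 x y (-s) ^ 2) * Nf a b x y ^ degree (h1 * h1) = 2 * eval2 HB x y"
    if "s^2 * Nf a b x y = d^2" for x y s
  proof -
    have "(eval3 (h1*h1) x y s + eval3 (h1*h1) x y (-s)) * eval2 (Np a b) x y ^ degree (h1*h1) = 2 * Hsum (h1*h1) (Np a b) (d^2) x y"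
      by (rule even_lemma) (use that in simp)
    thus ?thesis unfolding HB by (simp add: power2_eq_square)
  qed
  define PE where "PE = (\<Union>Q\<in>E. PreS f a b d Q)"
  have "finite PE" unfolding PE_def using E preS_finite[OF d circfin] by blast
  define C0' where "C0' = {(x,y). eval2 f x y = 0 \<and> Nf a b x y \<noteq> 0}"
  have "infinite (C0' - PE)" using C0_infinite[OF irr p0] \<open>finite PE\<close> by (simp add: C0'_def)
  have zero: "eval2 HA x y = 0 \<and> eval2 HB x y = 0" if xy: "(x, y) \<in> C0' - PE" for x y
  proof -
    have h: "eval2 f x y = 0" "Nf a b x y \<noteq> 0" "(x,y) \<notin> PE" using xy by (auto simp: C0'_def)
    obtain s where "s^2 = d^2 / Nf a b x y" using sqrt_exists by blast
    hence s: "s^2 * Nf a b x y = d^2" using h(2) by simp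
    have s': "(-s)^2 * Nf a b x y = d^2" using s by simp
    have inT: "(x + s * (x - a), y + s * (y - b)) \<in> ?T" "(x + (-s) * (x - a), y + (-s) * (y - b)) \<in> ?T"
      unfolding T_mem_iff using h s s' by blast+
    have "(x + s * (x - a), y + s * (y - b)) \<notin> E"
    proof
      assume "(x + s * (x - a), y + s * (y - b)) \<in> E"
      moreover have "(x, y) \<in> PreS f a b d (x + s * (x - a), y + s * (y - b))"
        using h s by (auto simp: PreS_def)
      ultimately show False using h(3) by (auto simp: PE_def)
    qed
    moreover have "(x + (-s) * (x - a), y + (-s) * (y - b)) \<notin> E"
    proof
      assume "(x + (-s) * (x - a), y + (-s) * (y - b)) \<in> E"
      moreover have "(x, y) \<in> PreS f a b d (x + (-s) * (x - a), y + (-s) * (y - b))"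
        unfolding PreS_def using h s' by blast
      ultimately show False using h(3) by (auto simp: PE_def)
    qed
    ultimately have "eval3 h1 x y s = 0" "eval3 h1 x y (-s) = 0"
      using van inT by (simp_all add: psi)
    thus ?thesis using evA[OF s] evB[OF s] by simp
  qed
  have infA: "infinite {(x,y). eval2 f x y = 0 \<and> eval2 HA x y = 0}"
  proof -
    have "C0' - PE \<subseteq> {(x,y). eval2 f x y = 0 \<and> eval2 HA x y = 0}" using zero by (auto simp: C0'_def)
    thus ?thesis using \<open>infinite (C0' - PE)\<close> finite_subset by blast
  qed
  have infB: "infinite {(x,y). eval2 f x y = 0 \<and> eval2 HB x y = 0}"
  proof -
    have "C0' - PE \<subseteq> {(x,y). eval2 f x y = 0 \<and> eval2 HB x y = 0}" using zero by (auto simp: C0'_def)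
    thus ?thesis using \<open>infinite (C0' - PE)\<close> finite_subset by blast
  qed
  obtain x y s where q: "eval2 f x y = 0" "Nf a b x y \<noteq> 0" "s^2 * Nf a b x y = d^2"
    "(q1, q2) = (x + s*(x-a), y + s*(y-b))" using Q unfolding T_mem_iff by blast
  have "eval2 HA x y = 0" by (rule ZL[OF irr infA q(1)])
  hence sA: "eval3 h1 x y s + eval3 h1 x y (-s) = 0" using evA[OF q(3)] q(2) by simp
  have "eval2 HB x y = 0" by (rule ZL[OF irr infB q(1)])
  hence sB: "eval3 h1 x y s ^ 2 + eval3 h1 x y (-s) ^ 2 = 0" using evB[OF q(3)] q(2) by simp
  have "eval3 h1 x y (-s) = - eval3 h1 x y s" using sA by (simp add: eq_neg_iff_add_eq_0 add.commute)
  hence "2 * eval3 h1 x y s ^ 2 = 0" using sB by simp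
  hence "eval3 h1 x y s = 0" by simp
  thus ?thesis using q(4) by (simp add: psi)
qed


lemma closure_T_minus:
  fixes f :: "'a::{alg_closed_field,field_char_0} poly poly"
  assumes irr: "irreducible f" and p0: "eval2 f x0 y0 = 0" "Nf a b x0 y0 \<noteq> 0"
    and d: "d \<noteq> 0" and circfin: "finite {(x,y). eval2 f x y = 0 \<and> Nf a b x y = d^2}"
    and E: "finite E"
  shows "zariski_closure (pi1 ` conchoid_B f (a,b) d - E) = zariski_closure (pi1 ` conchoid_B f (a,b) d)"
proof
  let ?T = "pi1 ` conchoid_B f (a,b) d"
  show "zariski_closure (?T - E) \<subseteq> zariski_closure ?T" by (rule closure_mono) blast
  obtain P where P: "zariski_closure (?T - E) = VV P" using closure_closed[of "?T - E"] by (auto simp: closed_iff)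
  have "?T \<subseteq> VV P"
  proof
    fix Q assume Q: "Q \<in> ?T"
    obtain q1 q2 where Qe: "Q = (q1, q2)" by (metis prod.collapse)
    have "eval2 g q1 q2 = 0" if g: "g \<in> P" for g
    proof (rule dense[OF irr p0 d circfin E _ Q[unfolded Qe]])
      fix r1 r2 assume "(r1, r2) \<in> ?T - E"
      moreover have "?T - E \<subseteq> VV P" using closure_sup[of "?T - E"] P by simp
      ultimately have "(r1, r2) \<in> VV P" by (rule subsetD[rotated])
      thus "eval2 g r1 r2 = 0" using g by (simp add: VV_mem)
    qed
    thus "Q \<in> VV P" by (simp add: Qe VV_mem)
  qed
  thus "zariski_closure ?T \<subseteq> zariski_closure (?T - E)" by (simp add: P closure_min closed_VV)
qed

lemma good_d:
  fixes f :: "'a::{alg_closed_field,field_char_0} poly poly"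
  assumes irr: "irreducible f" and p0: "eval2 f x0 y0 = 0" "Nf a b x0 y0 \<noteq> 0"
    and d: "d \<noteq> 0" and nb: "d^2 \<notin> BadE f a b" and nc: "Nf a b x0 y0 \<noteq> d^2"
    and comp: "irreducible_component M (conchoid f (a,b) d)"
  shows "simple_component f (a,b) d M"
proof -
  let ?B = "conchoid_B f (a,b) d"
  let ?T = "pi1 ` ?B"
  let ?V = "conchoid f (a,b) d"
  have V: "?V = zariski_closure ?T" by (simp add: conchoid_def)
  have circfin: "finite {(x,y). eval2 f x y = 0 \<and> Nf a b x y = d^2}" by (rule circfin_from[OF irr p0(1) nc])
  define D where "D = {Q \<in> ?T. card (PreS f a b d Q) \<noteq> 1}"
  have "finite (Ysd f a b d)" by (rule Ysd_finite[OF d Y_finite[OF irr nb]])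
  hence "finite ({(a,b)} \<union> (\<lambda>(x,y,s). (x + s*(x-a), y + s*(y-b))) ` Ysd f a b d)" by simp
  moreover have "D \<subseteq> {(a,b)} \<union> (\<lambda>(x,y,s). (x + s*(x-a), y + s*(y-b))) ` Ysd f a b d"
    using double_point unfolding D_def by blast
  ultimately have finD: "finite D" using finite_subset by blast
  define U where "U = ?T - D"
  have clU: "zariski_closure U = ?V" unfolding U_def V by (rule closure_T_minus[OF irr p0 d circfin finD])
  have cardU: "card (pi2 ` (pi1 -` {Q} \<inter> ?B)) = 1" if "Q \<in> U" for Q
    using that by (simp add: fiber_eq U_def D_def)
  have Mirr: "zariski_irreducible M" and MV: "M \<subseteq> ?V"
    and Mmax: "\<And>N. zariski_irreducible N \<Longrightarrow> M \<subseteq> N \<Longrightarrow> N \<subseteq> ?V \<Longrightarrow> N = M"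
    using comp unfolding irreducible_component_def by blast+
  have Mcl: "zariski_closed M" using Mirr by (simp add: zariski_irreducible_def)
  have Mne: "M \<noteq> {}" using Mirr by (simp add: zariski_irreducible_def)
  have key: "zariski_closure (M \<inter> U) = M"
  proof (cases "?V = UNIV")
    case True
    have "UNIV = M" using Mmax[OF UNIV_irreducible] True by simp
    thus ?thesis using clU True by simp
  next
    case False
    obtain \<G> E where GE: "finite \<G>" "finite E" "\<forall>G\<in>\<G>. irreducible G \<and> curve G \<subseteq> ?V"
        "?V = (\<Union>G\<in>\<G>. curve G) \<union> E"
      using structure_thm[OF _ False] closure_closed V by metis
    have clE: "zariski_closed E" using GE(2) by (rule closed_finite)
    have s1: "M \<subseteq> \<Union>(insert E (curve ` \<G>))" using MV GE(4) by auto
    have s2: "finite (insert E (curve ` \<G>))" using GE(1) by simp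
    have s3: "\<forall>A\<in>insert E (curve ` \<G>). zariski_closed A" by (simp add: clE closed_curve)
    have "\<exists>A\<in>insert E (curve ` \<G>). M \<subseteq> A" by (rule irr_sub_Union[OF Mirr s2 s3 s1])
    then obtain A where A: "A \<in> insert E (curve ` \<G>)" "M \<subseteq> A" by (rule bexE)
    show ?thesis
    proof (cases "A = E")
      case True
      hence "finite M" using A(2) GE(2) finite_subset by blast
      then obtain Q where MQ: "M = {Q}" using irr_finite_singleton[OF Mirr] by blast
      have nQ: "Q \<notin> curve G" if "G \<in> \<G>" for G
      proof
        assume "Q \<in> curve G"
        hence "curve G = M" using Mmax[OF curve_irreducible] GE(3) that MQ by auto
        thus False using curve_infinite GE(3) that MQ by fastforce
      qed
      define W where "W = (\<Union>G\<in>\<G>. curve G) \<union> (E - {Q})"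
      have clW: "zariski_closed W" unfolding W_def
        by (rule closed_Un[OF closed_Union_finite closed_finite]) (use GE(1,2) closed_curve in auto)
      have "?T - {Q} \<subseteq> W" using closure_sup[of ?T] V GE(4) by (auto simp: W_def)
      hence "zariski_closure (?T - {Q}) \<subseteq> W" by (rule closure_min[OF clW])
      hence "?V \<subseteq> W" using closure_T_minus[OF irr p0 d circfin, of "{Q}"] V by simp
      hence "Q \<in> W" using MV MQ by auto
      thus ?thesis using nQ by (auto simp: W_def)
    next
      case False
      then obtain G where G: "G \<in> \<G>" "A = curve G" using A(1) by auto
      have MG: "curve G = M" using Mmax[OF curve_irreducible] GE(3) G A(2) by auto
      define W where "W = (\<Union>G'\<in>{G'\<in>\<G>. curve G' \<noteq> M}. curve G') \<union> E"
      have clW: "zariski_closed W" unfolding W_def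
        by (rule closed_Un[OF closed_Union_finite closed_finite]) (use GE(1,2) closed_curve in auto)
      have TV: "?T \<subseteq> (\<Union>G\<in>\<G>. curve G) \<union> E" using closure_sup[of ?T] V GE(4) by simp
      have "U - M \<subseteq> W"
      proof
        fix Q assume Q: "Q \<in> U - M"
        hence QT: "Q \<in> ?T" and "Q \<notin> M" by (simp_all add: U_def)
        have "Q \<in> (\<Union>G\<in>\<G>. curve G) \<union> E" using TV QT by (rule subsetD)
        thus "Q \<in> W" using \<open>Q \<notin> M\<close> unfolding W_def by blast
      qed
      hence cW: "zariski_closure (U - M) \<subseteq> W" by (rule closure_min[OF clW])
      have "?V = zariski_closure ((M \<inter> U) \<union> (U - M))" using clU by (metis Int_Diff_Un Int_commute)
      also have "\<dots> = zariski_closure (M \<inter> U) \<union> zariski_closure (U - M)" by (rule closure_Un)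
      finally have "M \<subseteq> zariski_closure (M \<inter> U) \<union> W" using MV cW by blast
      hence "M \<subseteq> zariski_closure (M \<inter> U) \<or> M \<subseteq> W"
        using irr_sub_Un[OF Mirr _ closure_closed clW] by blast
      moreover have "\<not> M \<subseteq> W"
      proof
        assume MW: "M \<subseteq> W"
        have s1: "M \<subseteq> \<Union>(insert E (curve ` {G'\<in>\<G>. curve G' \<noteq> M}))" using MW by (auto simp: W_def)
        have s2: "finite (insert E (curve ` {G'\<in>\<G>. curve G' \<noteq> M}))" using GE(1) by simp
        have s3: "\<forall>A\<in>insert E (curve ` {G'\<in>\<G>. curve G' \<noteq> M}). zariski_closed A" by (simp add: clE closed_curve)
        have "\<exists>A\<in>insert E (curve ` {G'\<in>\<G>. curve G' \<noteq> M}). M \<subseteq> A" by (rule irr_sub_Union[OF Mirr s2 s3 s1])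
        then obtain A' where A': "A' \<in> insert E (curve ` {G'\<in>\<G>. curve G' \<noteq> M})" "M \<subseteq> A'" by (rule bexE)
        show False
        proof (cases "A' = E")
          case True
          hence "finite M" using A'(2) GE(2) finite_subset by blast
          thus False using MG curve_infinite GE(3) G(1) by metis
        next
          case False
          then obtain G' where G': "G' \<in> \<G>" "curve G' \<noteq> M" "A' = curve G'" using A'(1) by auto
          have "curve G' = M" using Mmax[OF curve_irreducible] GE(3) G' A'(2) by auto
          thus False using G'(2) by simp
        qed
      qed
      ultimately have "M \<subseteq> zariski_closure (M \<inter> U)" by blast
      moreover have "zariski_closure (M \<inter> U) \<subseteq> M" by (rule closure_min[OF Mcl]) blast
      ultimately show ?thesis by blast
    qed
  qed
  show ?thesis unfolding simple_component_def
  proof (intro exI[of _ "M \<inter> U"] conjI ballI)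
    show "M \<inter> U \<noteq> {}" using key Mne closure_empty_iff by metis
    show "M \<inter> U \<subseteq> M" by blast
    show "zariski_closure (M \<inter> U) = M" by (rule key)
    fix Q assume "Q \<in> M \<inter> U"
    thus "card (pi2 ` (pi1 -` {Q} \<inter> ?B)) = 1" using cardU by blast
  qed
qed

theorem theorem4:
  fixes f :: "'a :: {alg_closed_field, field_char_0} poly poly"
    and A :: "'a \<times> 'a"
  assumes "irreducible f"
    and "C0 f A \<noteq> {}"
    and "\<forall>r. curve f \<noteq> circle_centered A r"
    and "\<not> line_through A (curve f)"
  shows "finite {d. d \<noteq> 0 \<and>
           \<not> (\<forall>M. irreducible_component M (conchoid f A d) \<longrightarrow> simple_component f A d M)}"
proof -
  obtain a b where A: "A = (a, b)" by (cases A)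
  obtain x0 y0 where p0: "eval2 f x0 y0 = 0" "Nf a b x0 y0 \<noteq> 0"
    using assms(2) by (auto simp: C0_def curve_def Nf_def A)
  have fb: "finite (BadE f a b)" by (rule BadE_finite[OF assms(1) p0 assms(4)[unfolded A]])
  define S where "S = insert (Nf a b x0 y0) (BadE f a b)"
  have finS: "finite S" using fb by (simp add: S_def)
  have "{d. d^2 \<in> S} \<subseteq> (\<Union>e\<in>S. {d. poly [:-e, 0, 1:] d = 0})"
    by (auto simp: power2_eq_square algebra_simps)
  moreover have "finite (\<Union>e\<in>S. {d. poly [:-e, 0, 1:] (d::'a) = 0})"
  proof (rule finite_UN_I[OF finS])
    fix e :: 'a
    show "finite {d. poly [:-e, 0, 1:] (d::'a) = 0}" by (rule poly_roots_finite) simp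
  qed
  ultimately have fin: "finite {d. d^2 \<in> S}" using finite_subset by blast
  have "{d. d \<noteq> 0 \<and> \<not> (\<forall>M. irreducible_component M (conchoid f A d) \<longrightarrow> simple_component f A d M)}
        \<subseteq> {d. d^2 \<in> S}"
  proof (rule subsetI)
    fix d assume "d \<in> {d. d \<noteq> 0 \<and> \<not> (\<forall>M. irreducible_component M (conchoid f A d) \<longrightarrow> simple_component f A d M)}"
    then obtain M where d: "d \<noteq> 0" and comp: "irreducible_component M (conchoid f A d)"
      and ns: "\<not> simple_component f A d M" by blast
    show "d \<in> {d. d^2 \<in> S}"
    proof (rule ccontr)
      assume "d \<notin> {d. d^2 \<in> S}"
      hence "d^2 \<notin> BadE f a b" "Nf a b x0 y0 \<noteq> d^2" by (auto simp: S_def)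
      hence "simple_component f (a,b) d M" using good_d[OF assms(1) p0 d] comp A by metis
      thus False using ns A by simp
    qed
  qed
  thus ?thesis using fin finite_subset by blast
qed


end
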